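(* Let $\Lambda\subset[0,\infty)$ be an additive semigroup with $0\in\Lambda$, let $\omega$ be an admissible weight on $\Lambda$, let $d\in\mathbb{N}$, and let $\mathcal{A}$ be one of $M_d(\mathbb{C})$, $M_d(\mathbb{BC})$, $M_d(\mathbb{H})$. Then $\mathcal{D}(\Lambda,\omega,\mathcal{A})$ is inverse-closed in $\mathcal{D}(\Lambda,\mathcal{A})$: every $f\in\mathcal{D}(\Lambda,\omega,\mathcal{A})$ that is invertible in $\mathcal{D}(\Lambda,\mathcal{A})$ has its inverse in $\mathcal{D}(\Lambda,\omega,\mathcal{A})$.
   Context: $\mathcal{H}=\{s\in\mathbb C:\operatorname{Re}s\geq 0\}$. $M_d(\mathbb C)$: complex $d\times d$ matrices with operator norm. $M_d(\mathbb{BC})$: $d\times d$ matrices over the bicomplex numbers $\mathbb{BC}$ (real algebra spanned by $1,i,j,k$ with $i^2=j^2=-1$, $ij=ji=k$), written uniquely as $M_1\mathbf e_1+M_2\mathbf e_2$ with $\mathbf e_{1,2}=(1\pm k)/2$, $M_1,M_2$ complex matrices, operations componentwise, norm $\|M_1\|_{op}+\|M_2\|_{op}$. $M_d(\mathbb H)$: $d\times d$ quaternionic matrices with operator norm on $\mathbb H^{d\times 1}$. A weight on $\Lambda$ is $\omega:\Lambda\to[1,\infty)$ with $\omega(0)=1$, $\omega(\lambda_1+\lambda_2)\le\omega(\lambda_1)\omega(\lambda_2)$; admissible if $\lim_{n\to\infty}\omega(n\lambda)^{1/n}=1$ for all $\lambda$. $\mathcal D(\Lambda,\omega,\mathcal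 A)$ is the unital Banach algebra (pointwise product) of $f:\mathcal H\to\mathcal A$, $f(s)=\sum_{\lambda\in\Lambda}f_\lambda e^{-\lambda s}$ with $\sum_\lambda\|f_\lambda\|\omega(\lambda)<\infty$; $\mathcal D(\Lambda,\mathcal A)$ is the case $\omega\equiv1$. *)

theory Defs
  imports "HOL-Analysis.Analysis"
begin

section \<open>Semigroups of exponents and weights\<close>

definition exp_semigroup :: "real set \<Rightarrow> bool" where
  "exp_semigroup \<Lambda> \<longleftrightarrow> \<Lambda> \<subseteq> {0..} \<and> 0 \<in> \<Lambda> \<and> (\<forall>a\<in>\<Lambda>. \<forall>b\<in>\<Lambda>. a + b \<in> \<Lambda>)"

definition weight_on :: "real set \<Rightarrow> (real \<Rightarrow> real) \<Rightarrow> bool" where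
  "weight_on \<Lambda> \<omega> \<longleftrightarrow> (\<forall>x\<in>\<Lambda>. \<omega> x \<ge> 1) \<and> \<omega> 0 = 1 \<and>
     (\<forall>a\<in>\<Lambda>. \<forall>b\<in>\<Lambda>. \<omega> (a + b) \<le> \<omega> a * \<omega> b)"

definition admissible_weight :: "real set \<Rightarrow> (real \<Rightarrow> real) \<Rightarrow> bool" where
  "admissible_weight \<Lambda> \<omega> \<longleftrightarrow> weight_on \<Lambda> \<omega> \<and>
     (\<forall>x\<in>\<Lambda>. (\<lambda>n. root n (\<omega> (real n * x))) \<longlonglongrightarrow> 1)"

section \<open>Weighted algebras of generalized Dirichlet series (coefficient picture)\<close>

text \<open>An element of D(Lambda, omega, A) is represented by its coefficient family
  c :: real => A, supported on Lambda, with sum of nrm (c x) * omega x finite.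
  The product corresponds to the Cauchy (Dirichlet) convolution of coefficients.\<close>

definition Dset :: "('a \<Rightarrow> real) \<Rightarrow> real set \<Rightarrow> (real \<Rightarrow> real) \<Rightarrow> (real \<Rightarrow> 'a::zero) set" where
  "Dset nrm \<Lambda> \<omega> = {c. (\<forall>x. x \<notin> \<Lambda> \<longrightarrow> c x = 0) \<and> (\<lambda>x. nrm (c x) * \<omega> x) summable_on \<Lambda>}"

definition dconv :: "('a \<Rightarrow> 'a \<Rightarrow> 'a::{t2_space,comm_monoid_add}) \<Rightarrow> real set
    \<Rightarrow> (real \<Rightarrow> 'a) \<Rightarrow> (real \<Rightarrow> 'a) \<Rightarrow> real \<Rightarrow> 'a" where
  "dconv mul \<Lambda> c e = (\<lambda>\<nu>. \<Sum>\<^sub>\<infinity>(a, b)\<in>{(a, b). a \<in> \<Lambda> \<and> b \<in> \<Lambda> \<and> a + b = \<nu>}. mul (c a) (e b))"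

definition dunit :: "'a \<Rightarrow> real \<Rightarrow> 'a::zero" where
  "dunit one = (\<lambda>\<nu>. if \<nu> = 0 then one else 0)"

text \<open>D(Lambda,omega,A) is inverse-closed in D(Lambda,A): every element of the weighted
  algebra that has an inverse in the unweighted algebra has that inverse in the weighted one.\<close>

definition inverse_closed ::
  "('a \<Rightarrow> 'a \<Rightarrow> 'a::{t2_space,comm_monoid_add}) \<Rightarrow> 'a \<Rightarrow> ('a \<Rightarrow> real)
     \<Rightarrow> real set \<Rightarrow> (real \<Rightarrow> real) \<Rightarrow> bool" where
  "inverse_closed mul one nrm \<Lambda> \<omega> \<longleftrightarrow>
     (\<forall>c\<in>Dset nrm \<Lambda> \<omega>. \<forall>e\<in>Dset nrm \<Lambda> (\<lambda>_. 1).
        dconv mul \<Lambda> c e = dunit one \<and> dconv mul \<Lambda> e c = dunit one \<longrightarrow> e \<in> Dset nrm \<Lambda> \<omega>)"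

section \<open>The coefficient algebras\<close>

subsection \<open>M_d(C): complex d x d matrices, operator norm\<close>

definition cmat_norm :: "complex^'n^'n \<Rightarrow> real" where
  "cmat_norm A = onorm (\<lambda>x::complex^'n. A *v x)"

subsection \<open>M_d(BC): pairs (M1, M2) standing for M1 e1 + M2 e2\<close>

definition bcmat_mult :: "(complex^'n^'n) \<times> (complex^'n^'n) \<Rightarrow> (complex^'n^'n) \<times> (complex^'n^'n)
    \<Rightarrow> (complex^'n^'n) \<times> (complex^'n^'n)" where
  "bcmat_mult A B = (fst A ** fst B, snd A ** snd B)"

definition bcmat_one :: "(complex^'n^'n) \<times> (complex^'n^'n)" where
  "bcmat_one = (mat 1, mat 1)"

definition bcmat_norm :: "(complex^'n^'n) \<times> (complex^'n^'n) \<Rightarrow> real" where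
  "bcmat_norm A = cmat_norm (fst A) + cmat_norm (snd A)"

subsection \<open>M_d(H): quaternions as real^4 (coordinates w.r.t. 1, i, j, k) with Hamilton product\<close>

definition qmult :: "real^4 \<Rightarrow> real^4 \<Rightarrow> real^4" where
  "qmult p q = vector [
     p$1 * q$1 - p$2 * q$2 - p$3 * q$3 - p$4 * q$4,
     p$1 * q$2 + p$2 * q$1 + p$3 * q$4 - p$4 * q$3,
     p$1 * q$3 - p$2 * q$4 + p$3 * q$1 + p$4 * q$2,
     p$1 * q$4 + p$2 * q$3 - p$3 * q$2 + p$4 * q$1]"

definition qone :: "real^4" where
  "qone = vector [1, 0, 0, 0]"

definition hmat_mult :: "(real^4)^'n^'n \<Rightarrow> (real^4)^'n^'n \<Rightarrow> (real^4)^'n^'n" where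
  "hmat_mult A B = (\<chi> i j. \<Sum>k\<in>UNIV. qmult (A$i$k) (B$k$j))"

definition hmat_vec :: "(real^4)^'n^'n \<Rightarrow> (real^4)^'n \<Rightarrow> (real^4)^'n" where
  "hmat_vec A x = (\<chi> i. \<Sum>j\<in>UNIV. qmult (A$i$j) (x$j))"

definition hmat_one :: "(real^4)^'n^'n" where
  "hmat_one = (\<chi> i j. if i = j then qone else 0)"

text \<open>Operator norm on H^(d x 1); the norm of (real^4)^'n is the Euclidean one,
  i.e. sqrt of the sum of squared quaternion moduli.\<close>
definition hmat_norm :: "(real^4)^'n^'n \<Rightarrow> real" where
  "hmat_norm A = onorm (hmat_vec A)"

end

theory Submission
  imports Defs
begin

lemma has_sum_diff':
  fixes f g :: "'x \<Rightarrow> 'b::{topological_ab_group_add}"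
  assumes "(f has_sum S) A" "(g has_sum T) A"
  shows "((\<lambda>x. f x - g x) has_sum (S - T)) A"
proof -
  have "((\<lambda>x. - g x) has_sum (- T)) A" using has_sum_uminus[where f=g and a="-T" and A=A] assms(2) by simp
  from has_sum_add[OF assms(1) this] show ?thesis by simp
qed

lemma has_sum_product_nonneg:
  fixes f :: "'x \<Rightarrow> real" and g :: "'y \<Rightarrow> real"
  assumes "\<And>x. x\<in>A \<Longrightarrow> f x \<ge> 0" "\<And>y. y\<in>B \<Longrightarrow> g y \<ge> 0" "(f has_sum S) A" "(g has_sum T) B"
  shows "((\<lambda>(x,y). f x * g y) has_sum (S*T)) (A \<times> B)"
proof -
  have inner: "((\<lambda>y. f x * g y) has_sum f x * T) B" if "x \<in> A" for x
    using has_sum_cmult_right[OF assms(4)] by blast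
  have outer: "((\<lambda>x. f x * T) has_sum S*T) A" using has_sum_cmult_left[OF assms(3)] .
  have "(\<lambda>(x,y). f x * g y) summable_on Sigma A (\<lambda>_. B)"
    by (rule summable_on_SigmaI[where g="\<lambda>x. f x * T"])
       (use inner outer assms in \<open>auto simp: summable_on_def intro!: mult_nonneg_nonneg\<close>)
  then show ?thesis using has_sum_SigmaI[where A=A and f="(\<lambda>(x,y). f x * g y)" and g="\<lambda>x. f x * T" and B="\<lambda>_. B" and S="S*T"] inner outer
    by auto
qed

definition fib :: "real set \<Rightarrow> real \<Rightarrow> (real \<times> real) set" where
  "fib L v = {(a, b). a \<in> L \<and> b \<in> L \<and> a + b = v}"

lemma dconv_fib: "dconv mul L c e v = infsum (\<lambda>(a,b). mul (c a) (e b)) (fib L v)"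
  by (simp add: dconv_def fib_def)

lemma fiber_sum:
  fixes H :: "real \<times> real \<Rightarrow> 'b::banach"
  assumes L: "exp_semigroup L" and H: "H summable_on (L \<times> L)"
  shows "(\<lambda>v. infsum H (fib L v)) summable_on L"
    and "infsum (\<lambda>v. infsum H (fib L v)) L = infsum H (L \<times> L)"
proof -
  have cl: "a + b \<in> L" if "a \<in> L" "b \<in> L" for a b using L that by (auto simp: exp_semigroup_def)
  have eq: "(\<lambda>(v, p). H p) summable_on Sigma L (fib L) \<longleftrightarrow> H summable_on (L \<times> L)"
    by (rule summable_on_reindex_bij_witness[where i="\<lambda>(a,b). (a+b,(a,b))" and j="\<lambda>(v,p). p"])
       (auto simp: fib_def cl)
  have eq2: "infsum (\<lambda>(v, p). H p) (Sigma L (fib L)) = infsum H (L \<times> L)"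
    by (rule infsum_reindex_bij_witness[where i="\<lambda>(a,b). (a+b,(a,b))" and j="\<lambda>(v,p). p"])
       (auto simp: fib_def cl)
  have s: "(\<lambda>(v, p). H p) summable_on Sigma L (fib L)" using eq H by simp
  show "(\<lambda>v. infsum H (fib L v)) summable_on L"
    using summable_on_Sigma_banach[of "\<lambda>v p. H p" L "fib L"] s by simp
  show "infsum (\<lambda>v. infsum H (fib L v)) L = infsum H (L \<times> L)"
    using infsum_Sigma'_banach[of "\<lambda>v p. H p" L "fib L"] s eq2 by simp
qed

lemma nmul_in: "exp_semigroup L \<Longrightarrow> m \<in> L \<Longrightarrow> real n * m \<in> L"
proof (induction n)
  case 0 then show ?case by (simp add: exp_semigroup_def)
next
  case (Suc n)
  then have "real n * m + m \<in> L" by (auto simp: exp_semigroup_def)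
  then show ?case by (simp add: algebra_simps)
qed

lemma sumF_in:
  assumes "exp_semigroup L" "finite F" "F \<subseteq> L"
  shows "(\<Sum>m\<in>F. real (n m) * m) \<in> L"
  using assms(2,3)
proof (induction F rule: finite_induct)
  case empty then show ?case using assms(1) by (simp add: exp_semigroup_def)
next
  case (insert x F)
  then have "real (n x) * x \<in> L" "(\<Sum>m\<in>F. real (n m) * m) \<in> L"
    using nmul_in[OF assms(1)] by auto
  then show ?case using insert assms(1) by (auto simp: exp_semigroup_def)
qed

lemma C_mu:
  assumes sg: "exp_semigroup L" and adm: "admissible_weight L w" and m: "m \<in> L"
  shows "\<exists>C\<ge>1. \<forall>n. w (real n * m) \<le> C * 2 ^ n"
proof -
  have lim: "(\<lambda>n. root n (w (real n * m))) \<longlonglongrightarrow> 1" using adm m by (auto simp: admissible_weight_def)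
  have w1: "w x \<ge> 1" if "x \<in> L" for x using adm that by (auto simp: admissible_weight_def weight_on_def)
  from lim have "eventually (\<lambda>n. root n (w (real n * m)) < 2) sequentially"
    by (rule order_tendstoD) simp
  then obtain N where N: "\<And>n. n \<ge> N \<Longrightarrow> root n (w (real n * m)) < 2"
    by (auto simp: eventually_sequentially)
  define N' where "N' = max N 1"
  define C where "C = 1 + (\<Sum>k<N'. w (real k * m))"
  have wpos: "w (real k * m) \<ge> 1" for k using w1 nmul_in[OF sg m] by blast
  have wpos0: "w (real k * m) \<ge> 0" for k using wpos[of k] by linarith
  have "(\<Sum>k<N'. w (real k * m)) \<ge> 0" by (rule sum_nonneg) (rule wpos0)
  then have C1: "C \<ge> 1" unfolding C_def by linarith
  have "w (real n * m) \<le> C * 2 ^ n" for n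
  proof (cases "n < N'")
    case True
    have "w (real n * m) \<le> (\<Sum>k<N'. w (real k * m))"
      by (rule member_le_sum) (use True wpos0 in auto)
    also have "\<dots> \<le> C" by (simp add: C_def)
    also have "\<dots> \<le> C * 2 ^ n" using C1 by simp
    finally show ?thesis .
  next
    case False
    then have n: "n \<ge> N" "n > 0" by (auto simp: N'_def)
    have "w (real n * m) = root n (w (real n * m)) ^ n"
      using real_root_pow_pos2[OF n(2), of "w (real n * m)"] wpos[of n] by simp
    also have "\<dots> \<le> 2 ^ n"
      by (rule power_mono) (use N[OF n(1)] wpos0[of n] in \<open>auto intro: less_imp_le real_root_ge_zero\<close>)
    also have "\<dots> \<le> C * 2 ^ n" using C1 by simp
    finally show ?thesis .
  qed
  then show ?thesis using C1 by blast
qed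

lemma C_F:
  assumes sg: "exp_semigroup L" and adm: "admissible_weight L w" and F: "finite F" "F \<subseteq> L"
  shows "\<exists>C\<ge>1. \<forall>n. w (\<Sum>m\<in>F. real (n m) * m) \<le> C * 2 ^ (\<Sum>m\<in>F. n m)"
  using F
proof (induction F rule: finite_induct)
  case empty
  then show ?case using adm by (auto simp: admissible_weight_def weight_on_def)
next
  case (insert x F)
  obtain C where C: "C \<ge> 1" "\<And>n. w (\<Sum>m\<in>F. real (n m) * m) \<le> C * 2 ^ (\<Sum>m\<in>F. n m)"
    using insert by auto
  obtain Cx where Cx: "Cx \<ge> 1" "\<And>k. w (real k * x) \<le> Cx * 2 ^ k"
    using C_mu[OF sg adm, of x] insert by auto
  have w1: "w y \<ge> 1" if "y \<in> L" for y using adm that by (auto simp: admissible_weight_def weight_on_def)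
  have wsub: "w (a + b) \<le> w a * w b" if "a \<in> L" "b \<in> L" for a b
    using adm that by (auto simp: admissible_weight_def weight_on_def)
  have "w (\<Sum>m\<in>insert x F. real (n m) * m) \<le> (Cx * C) * 2 ^ (\<Sum>m\<in>insert x F. n m)" for n
  proof -
    have i1: "real (n x) * x \<in> L" using nmul_in[OF sg] insert by auto
    have i2: "(\<Sum>m\<in>F. real (n m) * m) \<in> L" using sumF_in[OF sg] insert by auto
    have "w (\<Sum>m\<in>insert x F. real (n m) * m) = w (real (n x) * x + (\<Sum>m\<in>F. real (n m) * m))"
      using insert by simp
    also have "\<dots> \<le> w (real (n x) * x) * w (\<Sum>m\<in>F. real (n m) * m)" by (rule wsub[OF i1 i2])
    also have "\<dots> \<le> (Cx * 2 ^ n x) * (C * 2 ^ (\<Sum>m\<in>F. n m))"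
      by (rule mult_mono[OF Cx(2) C(2)]) (use w1[OF i2] Cx(1) in auto)
    also have "\<dots> = (Cx * C) * 2 ^ (\<Sum>m\<in>insert x F. n m)"
      using insert by (simp add: power_add algebra_simps)
    finally show ?thesis .
  qed
  moreover have "Cx * C \<ge> 1" using mult_mono[OF Cx(1) C(1)] Cx(1) by simp
  ultimately show ?case by blast
qed

lemma sigma_exists:
  assumes sg: "exp_semigroup L" and adm: "admissible_weight L w" and F: "finite F" "F \<subseteq> L"
  shows "\<exists>\<sigma> C. C \<ge> 1 \<and> (\<forall>x\<in>L. w x \<le> C * \<sigma> x) \<and> (\<forall>x\<in>L. \<sigma> x \<le> w x) \<and> (\<forall>x\<in>F. \<sigma> x \<le> 2)
     \<and> (\<forall>a\<in>L. \<forall>b\<in>L. \<sigma> (a + b) \<le> \<sigma> a * \<sigma> b) \<and> (\<forall>x\<in>L. \<sigma> x > 0)"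
proof -
  obtain C where C: "C \<ge> 1" "\<And>n. w (\<Sum>m\<in>F. real (n m) * m) \<le> C * 2 ^ (\<Sum>m\<in>F. n m)"
    using C_F[OF sg adm F] by auto
  have w1: "w y \<ge> 1" if "y \<in> L" for y using adm that by (auto simp: admissible_weight_def weight_on_def)
  have w0: "w 0 = 1" using adm by (auto simp: admissible_weight_def weight_on_def)
  have wsub: "w (a + b) \<le> w a * w b" if "a \<in> L" "b \<in> L" for a b
    using adm that by (auto simp: admissible_weight_def weight_on_def)
  have cl: "a + b \<in> L" if "a \<in> L" "b \<in> L" for a b using sg that by (auto simp: exp_semigroup_def)
  have zL: "0 \<in> L" using sg by (auto simp: exp_semigroup_def)
  define S where "S x = {2 ^ (\<Sum>m\<in>F. n m) * w t | n t. t \<in> L \<and> x = (\<Sum>m\<in>F. real (n m) * m) + t}" for x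
  define sig where "sig x = Inf (S x)" for x
  have memS: "w x \<in> S x" if "x \<in> L" for x
    unfolding S_def using that by (intro CollectI exI[of _ "\<lambda>_. 0"] exI[of _ x]) auto
  have lowS: "w x / C \<le> s" if "x \<in> L" "s \<in> S x" for x s
  proof -
    from that(2) obtain n t where nt: "s = 2 ^ (\<Sum>m\<in>F. n m) * w t" "t \<in> L" "x = (\<Sum>m\<in>F. real (n m) * m) + t"
      unfolding S_def by blast
    have i: "(\<Sum>m\<in>F. real (n m) * m) \<in> L" using sumF_in[OF sg F] .
    have "w x \<le> w (\<Sum>m\<in>F. real (n m) * m) * w t" using nt(3) wsub[OF i nt(2)] by simp
    also have "\<dots> \<le> (C * 2 ^ (\<Sum>m\<in>F. n m)) * w t"
      by (rule mult_right_mono[OF C(2)]) (use w1[OF nt(2)] in auto)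
    finally have "w x \<le> C * s" using nt(1) by (simp add: algebra_simps)
    then show ?thesis using C(1) by (simp add: divide_le_eq mult.commute)
  qed
  have Spos: "s > 0" if "x \<in> L" "s \<in> S x" for x s
  proof -
    have "0 < w x / C" using w1[OF that(1)] C(1) by simp
    then show ?thesis using lowS[OF that] by linarith
  qed
  have bdd: "bdd_below (S x)" if "x \<in> L" for x using lowS[OF that] by (auto simp: bdd_below_def)
  have sig_le: "sig x \<le> s" if "x \<in> L" "s \<in> S x" for x s
    unfolding sig_def using bdd[OF that(1)] that(2) by (rule cInf_lower[rotated])
  have sig_ge: "w x / C \<le> sig x" if "x \<in> L" for x
    unfolding sig_def by (rule cInf_greatest) (use memS[OF that] lowS[OF that] in auto)
  have sig_pos: "sig x > 0" if "x \<in> L" for x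
  proof -
    have "0 < w x / C" using w1[OF that] C(1) by simp
    then show ?thesis using sig_ge[OF that] by linarith
  qed
  have P1: "\<forall>x\<in>L. w x \<le> C * sig x"
    using sig_ge C(1) by (auto simp: divide_le_eq mult.commute)
  have P2: "\<forall>x\<in>L. sig x \<le> w x" using sig_le memS by blast
  have P3: "\<forall>x\<in>F. sig x \<le> 2"
  proof
    fix x assume x: "x \<in> F"
    define n where "n = (\<lambda>m. if m = x then 1 else 0::nat)"
    have "(\<Sum>m\<in>F. real (n m) * m) = (\<Sum>m\<in>F. if m = x then m else 0)"
      by (rule sum.cong) (auto simp: n_def)
    then have e1: "(\<Sum>m\<in>F. real (n m) * m) = x" using x F(1) by (simp add: sum.delta')
    have e2: "(\<Sum>m\<in>F. n m) = 1" unfolding n_def using x F(1) by (simp add: sum.delta)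
    have "2 \<in> S x" unfolding S_def
      by (intro CollectI exI[of _ n] exI[of _ 0]) (use e1 e2 zL w0 in auto)
    then show "sig x \<le> 2" using sig_le x F(2) by blast
  qed
  have P4: "\<forall>a\<in>L. \<forall>b\<in>L. sig (a + b) \<le> sig a * sig b"
  proof (intro ballI)
    fix a b assume a: "a \<in> L" and b: "b \<in> L"
    have prod: "sig (a + b) \<le> s1 * s2" if s1: "s1 \<in> S a" and s2: "s2 \<in> S b" for s1 s2
    proof -
      from s1 obtain n1 t1 where 1: "s1 = 2 ^ (\<Sum>m\<in>F. n1 m) * w t1" "t1 \<in> L" "a = (\<Sum>m\<in>F. real (n1 m) * m) + t1"
        unfolding S_def by blast
      from s2 obtain n2 t2 where 2: "s2 = 2 ^ (\<Sum>m\<in>F. n2 m) * w t2" "t2 \<in> L" "b = (\<Sum>m\<in>F. real (n2 m) * m) + t2"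
        unfolding S_def by blast
      have "2 ^ (\<Sum>m\<in>F. (\<lambda>m. n1 m + n2 m) m) * w (t1 + t2) \<in> S (a + b)"
        unfolding S_def
        by (intro CollectI exI[of _ "\<lambda>m. n1 m + n2 m"] exI[of _ "t1 + t2"])
           (use 1 2 cl in \<open>auto simp: sum.distrib algebra_simps\<close>)
      then have "sig (a + b) \<le> 2 ^ (\<Sum>m\<in>F. (\<lambda>m. n1 m + n2 m) m) * w (t1 + t2)"
        using sig_le cl[OF a b] by blast
      also have "\<dots> \<le> 2 ^ (\<Sum>m\<in>F. (\<lambda>m. n1 m + n2 m) m) * (w t1 * w t2)"
        by (rule mult_left_mono[OF wsub[OF 1(2) 2(2)]]) simp
      also have "\<dots> = s1 * s2" using 1 2 by (simp add: sum.distrib power_add algebra_simps)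
      finally show ?thesis .
    qed
    have "sig (a + b) / s2 \<le> sig a" if s2: "s2 \<in> S b" for s2
    proof -
      have s2p: "s2 > 0" using Spos[OF b s2] .
      show ?thesis unfolding sig_def[of a]
        by (rule cInf_greatest) (use memS[OF a] prod[OF _ s2] s2p in \<open>auto simp: divide_le_eq mult.commute\<close>)
    qed
    then have "sig (a + b) / sig a \<le> sig b" unfolding sig_def[of b]
      by (intro cInf_greatest) (use memS[OF b] sig_pos[OF a] Spos[OF b] in \<open>auto simp: divide_le_eq mult.commute\<close>)
    then show "sig (a + b) \<le> sig a * sig b" using sig_pos[OF a] by (simp add: divide_le_eq mult.commute)
  qed
  show ?thesis using C(1) P1 P2 P3 P4 sig_pos by blast
qed

locale dalg =
  fixes L :: "real set" and mul :: "'a::banach \<Rightarrow> 'a \<Rightarrow> 'a" and one :: 'a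
  assumes sg: "exp_semigroup L" and bb: "bounded_bilinear mul"
    and assoc: "\<And>x y z. mul (mul x y) z = mul x (mul y z)"
    and unitL: "\<And>x. mul one x = x" and unitR: "\<And>x. mul x one = x"
begin

definition Kb where "Kb = (SOME K. K > 0 \<and> (\<forall>a b. norm (mul a b) \<le> norm a * norm b * K))"

lemma Kb: "Kb > 0" "norm (mul a b) \<le> norm a * norm b * Kb"
proof -
  have "\<exists>K. K > 0 \<and> (\<forall>a b. norm (mul a b) \<le> norm a * norm b * K)"
    using bounded_bilinear.pos_bounded[OF bb] by blast
  from someI_ex[OF this] show "Kb > 0" "norm (mul a b) \<le> norm a * norm b * Kb"
    unfolding Kb_def by blast+
qed

lemma Kb3: "norm (mul a b) \<le> Kb * (norm a * norm b)"
  using Kb(2)[of a b] by (simp add: mult.commute)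

lemma cl: "a \<in> L \<Longrightarrow> b \<in> L \<Longrightarrow> a + b \<in> L" using sg by (auto simp: exp_semigroup_def)
lemma zL: "0 \<in> L" using sg by (auto simp: exp_semigroup_def)
lemma nonnegL: "a \<in> L \<Longrightarrow> a \<ge> 0" using sg by (auto simp: exp_semigroup_def)

abbreviation conv where "conv f g \<equiv> dconv mul L f g"
definition supp0 :: "(real \<Rightarrow> 'a) \<Rightarrow> bool" where "supp0 f \<longleftrightarrow> (\<forall>x. x \<notin> L \<longrightarrow> f x = 0)"
definition l1 :: "(real \<Rightarrow> real) \<Rightarrow> (real \<Rightarrow> 'a) \<Rightarrow> bool" where
  "l1 w f \<longleftrightarrow> (\<lambda>x. norm (f x) * w x) summable_on L"
definition nw :: "(real \<Rightarrow> real) \<Rightarrow> (real \<Rightarrow> 'a) \<Rightarrow> real" where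
  "nw w f = infsum (\<lambda>x. norm (f x) * w x) L"

lemma nw_nonneg: "(\<And>x. x \<in> L \<Longrightarrow> w x \<ge> 0) \<Longrightarrow> nw w f \<ge> 0"
  unfolding nw_def by (intro infsum_nonneg) auto

lemma prod_summable:
  assumes f1: "l1 (\<lambda>_. 1) f" and g1: "l1 (\<lambda>_. 1) g"
  shows "(\<lambda>(a,b). norm (f a) * norm (g b)) summable_on (L \<times> L)"
    and "(\<lambda>p. norm ((\<lambda>(a,b). mul (f a) (g b)) p)) summable_on (L \<times> L)"
    and "(\<lambda>(a,b). mul (f a) (g b)) summable_on (L \<times> L)"
proof -
  have "((\<lambda>(a,b). norm (f a) * norm (g b)) has_sum (nw (\<lambda>_. 1) f * nw (\<lambda>_. 1) g)) (L \<times> L)"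
    by (rule has_sum_product_nonneg) (use f1 g1 in \<open>auto simp: l1_def nw_def\<close>)
  then show P: "(\<lambda>(a,b). norm (f a) * norm (g b)) summable_on (L \<times> L)"
    by (auto simp: summable_on_def)
  have P': "(\<lambda>p. Kb * (case p of (a,b) \<Rightarrow> norm (f a) * norm (g b))) summable_on (L \<times> L)"
    using summable_on_cmult_right[OF P] by simp
  show A: "(\<lambda>p. norm ((\<lambda>(a,b). mul (f a) (g b)) p)) summable_on (L \<times> L)"
    by (rule summable_on_comparison_test[OF P']) (auto simp: Kb3)
  show "(\<lambda>(a,b). mul (f a) (g b)) summable_on (L \<times> L)"
    using abs_summable_summable A by blast
qed

lemma fib_sub: "fib L v \<subseteq> L \<times> L" by (auto simp: fib_def)

lemma fib_summable:
  assumes f1: "l1 (\<lambda>_. 1) f" and g1: "l1 (\<lambda>_. 1) g"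
  shows "(\<lambda>(a,b). mul (f a) (g b)) summable_on fib L v"
    and "(\<lambda>p. norm ((\<lambda>(a,b). mul (f a) (g b)) p)) summable_on fib L v"
    and "(\<lambda>(a,b). norm (f a) * norm (g b)) summable_on fib L v"
  using summable_on_subset_banach[OF prod_summable(3)[OF f1 g1] fib_sub]
    summable_on_subset_banach[OF prod_summable(2)[OF f1 g1] fib_sub]
    summable_on_subset_banach[OF prod_summable(1)[OF f1 g1] fib_sub] by auto

lemma CL:
  assumes f1: "l1 (\<lambda>_. 1) f" and g1: "l1 (\<lambda>_. 1) g"
    and wpos: "\<And>x. x \<in> L \<Longrightarrow> 0 \<le> w x"
    and wsub: "\<And>a b. a \<in> L \<Longrightarrow> b \<in> L \<Longrightarrow> w (a + b) \<le> w a * w b"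
    and fw: "l1 w f" and gw: "l1 w g"
  shows "l1 w (conv f g)" "nw w (conv f g) \<le> Kb * nw w f * nw w g"
proof -
  define Q where "Q = (\<lambda>(a,b). Kb * ((norm (f a) * w a) * (norm (g b) * w b)))"
  have "((\<lambda>(a,b). (norm (f a) * w a) * (norm (g b) * w b)) has_sum (nw w f * nw w g)) (L \<times> L)"
    by (rule has_sum_product_nonneg) (use fw gw wpos in \<open>auto simp: l1_def nw_def\<close>)
  from has_sum_cmult_right[OF this, of Kb]
  have Qs: "(Q has_sum (Kb * (nw w f * nw w g))) (L \<times> L)"
    unfolding Q_def by (simp add: case_prod_unfold)
  have Qsum: "Q summable_on L \<times> L" using Qs by (auto simp: summable_on_def)
  have F1: "(\<lambda>v. infsum Q (fib L v)) summable_on L"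
    and F2: "infsum (\<lambda>v. infsum Q (fib L v)) L = infsum Q (L \<times> L)"
    using fiber_sum[OF sg Qsum] by auto
  have Qfib: "Q summable_on fib L v" for v using summable_on_subset_banach[OF Qsum fib_sub] .
  have bound: "norm (conv f g v) * w v \<le> infsum Q (fib L v)" if v: "v \<in> L" for v
  proof -
    have "norm (conv f g v) \<le> infsum (\<lambda>p. norm ((\<lambda>(a,b). mul (f a) (g b)) p)) (fib L v)"
      unfolding dconv_fib by (rule norm_infsum_bound) (use fib_summable[OF f1 g1] in auto)
    also have "\<dots> \<le> infsum (\<lambda>(a,b). Kb * (norm (f a) * norm (g b))) (fib L v)"
    proof (rule infsum_mono)
      show "(\<lambda>(a,b). Kb * (norm (f a) * norm (g b))) summable_on fib L v"
        using summable_on_cmult_right[OF fib_summable(3)[OF f1 g1], of Kb v]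
        by (simp add: case_prod_unfold)
    qed (use fib_summable[OF f1 g1] Kb3 in \<open>auto\<close>)
    finally have 1: "norm (conv f g v) * w v \<le> infsum (\<lambda>(a,b). Kb * (norm (f a) * norm (g b))) (fib L v) * w v"
      using wpos[OF v] by (rule mult_right_mono)
    also have "\<dots> = infsum (\<lambda>p. (\<lambda>(a,b). Kb * (norm (f a) * norm (g b))) p * w v) (fib L v)"
      by (rule infsum_cmult_left[symmetric])
         (use summable_on_cmult_right[OF fib_summable(3)[OF f1 g1], of Kb v] in \<open>simp add: case_prod_unfold\<close>)
    also have "\<dots> \<le> infsum Q (fib L v)"
    proof (rule infsum_mono)
      show "(\<lambda>p. (\<lambda>(a,b). Kb * (norm (f a) * norm (g b))) p * w v) summable_on fib L v"
        by (rule summable_on_cmult_left)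
           (use summable_on_cmult_right[OF fib_summable(3)[OF f1 g1], of Kb v] in \<open>simp add: case_prod_unfold\<close>)
      show "Q summable_on fib L v" by (rule Qfib)
      fix p assume p: "p \<in> fib L v"
      then obtain a b where ab: "p = (a,b)" "a \<in> L" "b \<in> L" "v = a + b" by (auto simp: fib_def)
      have "Kb * (norm (f a) * norm (g b)) * w (a+b) \<le> Kb * (norm (f a) * norm (g b)) * (w a * w b)"
        by (rule mult_left_mono[OF wsub[OF ab(2,3)]]) (use Kb(1) in auto)
      then show "(\<lambda>(a,b). Kb * (norm (f a) * norm (g b))) p * w v \<le> Q p"
        using ab by (simp add: Q_def algebra_simps)
    qed
    finally show ?thesis .
  qed
  have S: "(\<lambda>v. norm (conv f g v) * w v) summable_on L"
    by (rule summable_on_comparison_test[OF F1]) (use bound wpos in auto)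
  then show "l1 w (conv f g)" by (simp add: l1_def)
  have "nw w (conv f g) \<le> infsum (\<lambda>v. infsum Q (fib L v)) L"
    unfolding nw_def by (rule infsum_mono[OF S F1]) (use bound in auto)
  also have "\<dots> = Kb * (nw w f * nw w g)" using F2 Qs by (simp add: infsumI)
  finally show "nw w (conv f g) \<le> Kb * nw w f * nw w g" by (simp add: mult.assoc)
qed

lemma fib_empty: "v \<notin> L \<Longrightarrow> fib L v = {}" by (auto simp: fib_def cl)

lemma conv_supp: "supp0 (conv f g)"
  unfolding supp0_def dconv_fib by (auto simp: fib_empty)

lemma l1_diff:
  assumes "l1 w f" "l1 w g" "\<And>x. x \<in> L \<Longrightarrow> 0 \<le> w x"
  shows "l1 w (\<lambda>x. f x - g x)" "nw w (\<lambda>x. f x - g x) \<le> nw w f + nw w g"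
proof -
  have S: "(\<lambda>x. norm (f x) * w x + norm (g x) * w x) summable_on L"
    using summable_on_add assms(1,2) unfolding l1_def by blast
  have le: "norm (f x - g x) * w x \<le> norm (f x) * w x + norm (g x) * w x" if "x \<in> L" for x
    using mult_right_mono[OF norm_triangle_ineq4[of "f x" "g x"] assms(3)[OF that]]
    by (simp add: algebra_simps)
  show T: "l1 w (\<lambda>x. f x - g x)" unfolding l1_def
    by (rule summable_on_comparison_test[OF S]) (use le assms(3) in auto)
  have "nw w (\<lambda>x. f x - g x) \<le> infsum (\<lambda>x. norm (f x) * w x + norm (g x) * w x) L"
    unfolding nw_def by (rule infsum_mono[OF T[unfolded l1_def] S]) (use le in auto)
  also have "\<dots> = nw w f + nw w g" unfolding nw_def
    by (rule infsum_add) (use assms in \<open>auto simp: l1_def\<close>)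
  finally show "nw w (\<lambda>x. f x - g x) \<le> nw w f + nw w g" .
qed

lemma conv_diff_left:
  assumes "l1 (\<lambda>_. 1) f1" "l1 (\<lambda>_. 1) f2" "l1 (\<lambda>_. 1) g"
  shows "conv (\<lambda>x. f1 x - f2 x) g v = conv f1 g v - conv f2 g v"
proof -
  have "((\<lambda>p. (\<lambda>(a,b). mul (f1 a) (g b)) p - (\<lambda>(a,b). mul (f2 a) (g b)) p) has_sum
      (conv f1 g v - conv f2 g v)) (fib L v)"
    unfolding dconv_fib
    by (rule has_sum_diff') (use fib_summable(1)[OF assms(1,3)] fib_summable(1)[OF assms(2,3)] in auto)
  then show ?thesis unfolding dconv_fib[of _ _ "\<lambda>x. f1 x - f2 x"]
    by (simp add: case_prod_unfold bounded_bilinear.diff_left[OF bb] infsumI)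
qed

lemma conv_diff_right:
  assumes "l1 (\<lambda>_. 1) f" "l1 (\<lambda>_. 1) g1" "l1 (\<lambda>_. 1) g2"
  shows "conv f (\<lambda>x. g1 x - g2 x) v = conv f g1 v - conv f g2 v"
proof -
  have "((\<lambda>p. (\<lambda>(a,b). mul (f a) (g1 b)) p - (\<lambda>(a,b). mul (f a) (g2 b)) p) has_sum
      (conv f g1 v - conv f g2 v)) (fib L v)"
    unfolding dconv_fib
    by (rule has_sum_diff') (use fib_summable(1)[OF assms(1,2)] fib_summable(1)[OF assms(1,3)] in auto)
  then show ?thesis unfolding dconv_fib[of _ _ _ "\<lambda>x. g1 x - g2 x"]
    by (simp add: case_prod_unfold bounded_bilinear.diff_right[OF bb] infsumI)
qed

lemma conv_unit_right:
  assumes "supp0 f"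
  shows "conv f (dunit one) = f"
proof
  fix v
  show "conv f (dunit one) v = f v"
  proof (cases "v \<in> L")
    case False
    then show ?thesis using assms by (simp add: dconv_fib fib_empty supp0_def)
  next
    case True
    have "conv f (dunit one) v = infsum (\<lambda>p. mul (f (fst p)) one) {(v, 0::real)}"
      unfolding dconv_fib
      by (rule infsum_cong_neutral)
         (use True zL in \<open>auto simp: fib_def dunit_def bounded_bilinear.zero_right[OF bb] split: if_splits\<close>)
    then show ?thesis by (simp add: unitR)
  qed
qed

lemma conv_unit_left:
  assumes "supp0 f"
  shows "conv (dunit one) f = f"
proof
  fix v
  show "conv (dunit one) f v = f v"
  proof (cases "v \<in> L")
    case False
    then show ?thesis using assms by (simp add: dconv_fib fib_empty supp0_def)
  next
    case True
    have "conv (dunit one) f v = infsum (\<lambda>p. mul one (f (snd p))) {(0::real, v)}"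
      unfolding dconv_fib
      by (rule infsum_cong_neutral)
         (use True zL in \<open>auto simp: fib_def dunit_def bounded_bilinear.zero_left[OF bb] split: if_splits\<close>)
    then show ?thesis by (simp add: unitL)
  qed
qed

definition T3 :: "real \<Rightarrow> (real \<times> real \<times> real) set" where
  "T3 v = {(x,y,z). x \<in> L \<and> y \<in> L \<and> z \<in> L \<and> x + y + z = v}"

lemma triple_L:
  fixes G :: "real \<Rightarrow> real \<Rightarrow> real \<Rightarrow> 'a"
  assumes "(\<lambda>(x,y,z). G x y z) summable_on T3 v"
  shows "infsum (\<lambda>(a,b). infsum (\<lambda>(x,y). G x y b) (fib L a)) (fib L v) = infsum (\<lambda>(x,y,z). G x y z) (T3 v)"
proof -
  have S: "(\<lambda>((a,b),(x,y)). G x y b) summable_on Sigma (fib L v) (\<lambda>(a,b). fib L a)"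
    using assms
    by (subst summable_on_reindex_bij_witness[where j="\<lambda>((a,b),(x,y)). (x,y,b)" and i="\<lambda>(x,y,z). ((x+y,z),(x,y))"
          and T="T3 v" and h="\<lambda>(x,y,z). G x y z"])
       (auto simp: fib_def T3_def cl)
  have "infsum (\<lambda>(a,b). infsum (\<lambda>(x,y). G x y b) (fib L a)) (fib L v)
      = infsum (\<lambda>((a,b),(x,y)). G x y b) (Sigma (fib L v) (\<lambda>(a,b). fib L a))"
    using infsum_Sigma'_banach[of "\<lambda>(a,b) (x,y). G x y b" "fib L v" "\<lambda>(a,b). fib L a"] S
    by (simp add: case_prod_unfold)
  also have "\<dots> = infsum (\<lambda>(x,y,z). G x y z) (T3 v)"
    by (rule infsum_reindex_bij_witness[where j="\<lambda>((a,b),(x,y)). (x,y,b)" and i="\<lambda>(x,y,z). ((x+y,z),(x,y))"])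
       (auto simp: fib_def T3_def cl)
  finally show ?thesis .
qed

lemma triple_R:
  fixes G :: "real \<Rightarrow> real \<Rightarrow> real \<Rightarrow> 'a"
  assumes "(\<lambda>(x,y,z). G x y z) summable_on T3 v"
  shows "infsum (\<lambda>(a,b). infsum (\<lambda>(y,z). G a y z) (fib L b)) (fib L v) = infsum (\<lambda>(x,y,z). G x y z) (T3 v)"
proof -
  have S: "(\<lambda>((a,b),(y,z)). G a y z) summable_on Sigma (fib L v) (\<lambda>(a,b). fib L b)"
    using assms
    by (subst summable_on_reindex_bij_witness[where j="\<lambda>((a,b),(y,z)). (a,y,z)" and i="\<lambda>(x,y,z). ((x,y+z),(y,z))"
          and T="T3 v" and h="\<lambda>(x,y,z). G x y z"])
       (auto simp: fib_def T3_def cl add.assoc)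
  have "infsum (\<lambda>(a,b). infsum (\<lambda>(y,z). G a y z) (fib L b)) (fib L v)
      = infsum (\<lambda>((a,b),(y,z)). G a y z) (Sigma (fib L v) (\<lambda>(a,b). fib L b))"
    using infsum_Sigma'_banach[of "\<lambda>(a,b) (y,z). G a y z" "fib L v" "\<lambda>(a,b). fib L b"] S
    by (simp add: case_prod_unfold)
  also have "\<dots> = infsum (\<lambda>(x,y,z). G x y z) (T3 v)"
    by (rule infsum_reindex_bij_witness[where j="\<lambda>((a,b),(y,z)). (a,y,z)" and i="\<lambda>(x,y,z). ((x,y+z),(y,z))"])
       (auto simp: fib_def T3_def cl add.assoc)
  finally show ?thesis .
qed

lemma conv_assoc:
  assumes f1: "l1 (\<lambda>_. 1) f" and g1: "l1 (\<lambda>_. 1) g" and h1: "l1 (\<lambda>_. 1) h"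
  shows "conv (conv f g) h = conv f (conv g h)"
proof
  fix v
  define G where "G = (\<lambda>x y z. mul (mul (f x) (g y)) (h z))"
  have P2: "((\<lambda>(y,z). norm (g y) * norm (h z)) has_sum (nw (\<lambda>_. 1) g * nw (\<lambda>_. 1) h)) (L \<times> L)"
    by (rule has_sum_product_nonneg) (use g1 h1 in \<open>auto simp: l1_def nw_def\<close>)
  have P3: "((\<lambda>(x,p). norm (f x) * (\<lambda>(y,z). norm (g y) * norm (h z)) p) has_sum
      (nw (\<lambda>_. 1) f * (nw (\<lambda>_. 1) g * nw (\<lambda>_. 1) h))) (L \<times> (L \<times> L))"
    by (rule has_sum_product_nonneg[OF _ _ _ P2]) (use f1 in \<open>auto simp: l1_def nw_def\<close>)
  have P3s: "(\<lambda>(x,y,z). Kb * (Kb * (norm (f x) * (norm (g y) * norm (h z))))) summable_on (L \<times> (L \<times> L))"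
    using summable_on_cmult_right[OF summable_on_cmult_right[OF P3[THEN has_sum_imp_summable]], of Kb Kb]
    by (simp add: case_prod_unfold)
  have Gb: "norm (G x y z) \<le> Kb * (Kb * (norm (f x) * (norm (g y) * norm (h z))))" for x y z
  proof -
    have "norm (G x y z) \<le> Kb * (norm (mul (f x) (g y)) * norm (h z))" unfolding G_def by (rule Kb3)
    also have "\<dots> \<le> Kb * ((Kb * (norm (f x) * norm (g y))) * norm (h z))"
      by (intro mult_left_mono mult_right_mono Kb3) (use Kb(1) in auto)
    finally show ?thesis by (simp add: algebra_simps)
  qed
  have Gabs: "(\<lambda>p. norm ((\<lambda>(x,y,z). G x y z) p)) summable_on (L \<times> (L \<times> L))"
    by (rule summable_on_comparison_test[OF P3s]) (auto intro: Gb)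
  have Gs: "(\<lambda>(x,y,z). G x y z) summable_on T3 v"
    by (rule summable_on_subset_banach[OF abs_summable_summable[OF Gabs]]) (auto simp: T3_def)
  have "conv (conv f g) h v = infsum (\<lambda>(a,b). infsum (\<lambda>(x,y). G x y b) (fib L a)) (fib L v)"
    unfolding dconv_fib[of _ _ "conv f g"]
  proof (rule infsum_cong, clarify)
    fix a b
    have "((\<lambda>p. mul ((\<lambda>(x,y). mul (f x) (g y)) p) (h b)) has_sum mul (conv f g a) (h b)) (fib L a)"
      unfolding dconv_fib
      by (rule has_sum_bounded_linear[OF bounded_bilinear.bounded_linear_left[OF bb]])
         (use fib_summable(1)[OF f1 g1] in auto)
    then show "mul (conv f g a) (h b) = infsum (\<lambda>(x,y). G x y b) (fib L a)"
      by (simp add: G_def case_prod_unfold infsumI)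
  qed
  also have "\<dots> = infsum (\<lambda>(x,y,z). G x y z) (T3 v)" by (rule triple_L[OF Gs])
  also have "\<dots> = infsum (\<lambda>(a,b). infsum (\<lambda>(y,z). G a y z) (fib L b)) (fib L v)"
    by (rule triple_R[OF Gs, symmetric])
  also have "\<dots> = conv f (conv g h) v"
    unfolding dconv_fib[of _ _ _ "conv g h"]
  proof (rule infsum_cong, clarify)
    fix a b
    have "((\<lambda>p. mul (f a) ((\<lambda>(y,z). mul (g y) (h z)) p)) has_sum mul (f a) (conv g h b)) (fib L b)"
      unfolding dconv_fib
      by (rule has_sum_bounded_linear[OF bounded_bilinear.bounded_linear_right[OF bb]])
         (use fib_summable(1)[OF g1 h1] in auto)
    then show "infsum (\<lambda>(y,z). G a y z) (fib L b) = mul (f a) (conv g h b)"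
      by (simp add: G_def case_prod_unfold infsumI assoc)
  qed
  finally show "conv (conv f g) h v = conv f (conv g h) v" .
qed

lemma l1_finite:
  assumes "finite {x\<in>L. f x \<noteq> 0}"
  shows "l1 w f"
  unfolding l1_def
  by (rule finite_nonzero_values_imp_summable_on) (rule finite_subset[OF _ assms], auto)

lemma nw_point:
  assumes "l1 (\<lambda>_. 1) f" "v \<in> L"
  shows "norm (f v) \<le> nw (\<lambda>_. 1) f"
proof -
  have "sum (\<lambda>x. norm (f x) * 1) {v} \<le> nw (\<lambda>_. 1) f"
    unfolding nw_def by (rule finite_sum_le_infsum) (use assms in \<open>auto simp: l1_def\<close>)
  then show ?thesis by simp
qed

lemma l1_le_scale:
  assumes "l1 w f" "\<And>x. x \<in> L \<Longrightarrow> 0 \<le> w1 x" "\<And>x. x \<in> L \<Longrightarrow> w1 x \<le> C * w x"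
  shows "l1 w1 f" "nw w1 f \<le> C * nw w f"
proof -
  have S: "(\<lambda>x. C * (norm (f x) * w x)) summable_on L"
    using summable_on_cmult_right assms(1) unfolding l1_def by blast
  have le: "norm (f x) * w1 x \<le> C * (norm (f x) * w x)" if "x \<in> L" for x
    using mult_left_mono[OF assms(3)[OF that] norm_ge_zero[of "f x"]] by (simp add: algebra_simps)
  show T: "l1 w1 f" unfolding l1_def
    by (rule summable_on_comparison_test[OF S]) (use le assms(2) in auto)
  have "nw w1 f \<le> infsum (\<lambda>x. C * (norm (f x) * w x)) L"
    unfolding nw_def by (rule infsum_mono[OF T[unfolded l1_def] S]) (use le in auto)
  also have "\<dots> = C * nw w f" unfolding nw_def by (rule infsum_cmult_right) (use assms(1) l1_def in auto)
  finally show "nw w1 f \<le> C * nw w f" .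
qed

lemma del_supp: "supp0 (dunit one)" using zL by (auto simp: supp0_def dunit_def)

lemma del_l1: "l1 w (dunit one)"
  by (rule l1_finite) (rule finite_subset[of _ "{0}"], auto simp: dunit_def)

lemma del_nw: "nw w (dunit one) = norm one * w 0"
proof -
  have "nw w (dunit one) = infsum (\<lambda>x. norm (dunit one x) * w x) {0}"
    unfolding nw_def by (rule infsum_cong_neutral) (use zL in \<open>auto simp: dunit_def\<close>)
  then show ?thesis by (simp add: dunit_def)
qed

theorem inv_closed_abs:
  assumes adm: "admissible_weight L w"
    and c0: "supp0 c" and cw: "l1 w c" and e0: "supp0 e" and e1: "l1 (\<lambda>_. 1) e"
    and ce: "conv c e = dunit one" and ec: "conv e c = dunit one"
  shows "l1 w e"
proof -
  define del where "del = dunit one"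
  have w1: "w y \<ge> 1" if "y \<in> L" for y using adm that by (auto simp: admissible_weight_def weight_on_def)
  have w0: "w 0 = 1" using adm by (auto simp: admissible_weight_def weight_on_def)
  have wsub: "w (a + b) \<le> w a * w b" if "a \<in> L" "b \<in> L" for a b
    using adm that by (auto simp: admissible_weight_def weight_on_def)
  have wpos: "0 \<le> w x" if "x \<in> L" for x using w1[OF that] by linarith
  have one_sub: "(1::real) \<le> 1 * 1" by simp
  have c1: "l1 (\<lambda>_. 1) c" "nw (\<lambda>_. 1) c \<le> 1 * nw w c"
    using l1_le_scale[OF cw, of "\<lambda>_. 1" 1] w1 by auto
  have Kp: "Kb > 0" by (rule Kb(1))
  have nc1: "nw (\<lambda>_. 1) c \<ge> 0" by (rule nw_nonneg) simp
  have ne1: "nw (\<lambda>_. 1) e \<ge> 0" by (rule nw_nonneg) simp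
  \<comment> \<open>Step 1: finite approximation g of e\<close>
  define eta where "eta = 1 / (4 * Kb * Kb * (nw (\<lambda>_. 1) c + 1))"
  have eta_pos: "eta > 0" unfolding eta_def using Kp nc1 by simp
  obtain G where G: "finite G" "G \<subseteq> L"
    "dist (sum (\<lambda>x. norm (e x) * 1) G) (nw (\<lambda>_. 1) e) \<le> eta"
    using infsum_finite_approximation[of "\<lambda>x. norm (e x) * 1" L eta] e1 eta_pos
    unfolding l1_def nw_def by blast
  define g where "g x = (if x \<in> G then e x else 0)" for x
  define d where "d x = e x - g x" for x
  have g0: "supp0 g" using G(2) by (auto simp: supp0_def g_def)
  have gl1: "l1 w' g" for w' by (rule l1_finite) (rule finite_subset[OF _ G(1)], auto simp: g_def)
  have d1: "l1 (\<lambda>_. 1) d" unfolding d_def by (rule l1_diff(1)[OF e1 gl1]) simp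
  have nd1: "nw (\<lambda>_. 1) d \<le> eta"
  proof -
    have hs1: "((\<lambda>x. norm (e x) * 1) has_sum nw (\<lambda>_. 1) e) L" using e1 unfolding l1_def nw_def by simp
    have hs2: "((\<lambda>x. if x \<in> G then norm (e x) * 1 else 0) has_sum sum (\<lambda>x. norm (e x) * 1) G) L"
    proof -
      have "((\<lambda>x. norm (e x) * 1) has_sum sum (\<lambda>x. norm (e x) * 1) G) G" using G(1) by simp
      then show ?thesis
        by (subst has_sum_cong_neutral[where T=G]) (use G(2) in auto)
    qed
    have "((\<lambda>x. norm (e x) * 1 - (if x \<in> G then norm (e x) * 1 else 0)) has_sum
        (nw (\<lambda>_. 1) e - sum (\<lambda>x. norm (e x) * 1) G)) L"
      by (rule has_sum_diff'[OF hs1 hs2])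
    moreover have "norm (d x) * 1 = norm (e x) * 1 - (if x \<in> G then norm (e x) * 1 else 0)" for x
      by (simp add: d_def g_def)
    ultimately have "nw (\<lambda>_. 1) d = nw (\<lambda>_. 1) e - sum (\<lambda>x. norm (e x) * 1) G"
      unfolding nw_def by (simp add: infsumI)
    then show ?thesis using G(3) by (simp add: dist_real_def)
  qed
  \<comment> \<open>Step 2: r\<close>
  define u where "u = conv c g"
  define r where "r x = del x - u x" for x
  have u1: "l1 (\<lambda>_. 1) u" unfolding u_def by (rule CL(1)[OF c1(1) gl1]) (use c1 gl1 in auto)
  have uw: "l1 w u" unfolding u_def by (rule CL(1)[OF c1(1) gl1 wpos wsub cw gl1])
  have r_eq: "r = conv c d"
  proof
    fix v
    show "r v = conv c d v"
      unfolding d_def using conv_diff_right[OF c1(1) e1 gl1, of v] ce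
      by (simp add: r_def del_def u_def)
  qed
  have r1: "l1 (\<lambda>_. 1) r" unfolding r_def del_def by (rule l1_diff(1)[OF del_l1 u1]) simp
  have rw: "l1 w r" unfolding r_def del_def by (rule l1_diff(1)[OF del_l1 uw wpos])
  have r0: "supp0 r" using r_eq conv_supp by simp
  have nr1: "nw (\<lambda>_. 1) r \<le> 1 / (4 * Kb)"
  proof -
    have "nw (\<lambda>_. 1) r \<le> Kb * nw (\<lambda>_. 1) c * nw (\<lambda>_. 1) d"
      unfolding r_eq by (rule CL(2)[OF c1(1) d1]) (auto simp: c1 d1)
    also have "\<dots> \<le> Kb * (nw (\<lambda>_. 1) c + 1) * eta"
      by (intro mult_mono nd1) (use Kp nc1 nw_nonneg[of "\<lambda>_. 1" d] in auto)
    also have "\<dots> = 1 / (4 * Kb)"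
    proof -
      have gen: "K * x * (1 / (4 * K * K * x)) = 1 / (4 * K)" if "x > 0" "K > 0" for x K :: real
        using that by (simp add: field_simps)
      show ?thesis unfolding eta_def using gen[of "nw (\<lambda>_. 1) c + 1" Kb] Kp nc1 by simp
    qed
    finally show ?thesis .
  qed
  \<comment> \<open>Step 3: F and sigma\<close>
  have Kp4: "1 / (4 * Kb) > 0" using Kp by simp
  obtain F where F: "finite F" "F \<subseteq> L"
    "dist (sum (\<lambda>x. norm (r x) * w x) F) (nw w r) \<le> 1 / (4 * Kb)"
    using infsum_finite_approximation[of "\<lambda>x. norm (r x) * w x" L "1 / (4 * Kb)"] rw Kp4
    unfolding l1_def nw_def by blast
  obtain sig C where SC: "C \<ge> 1" "\<forall>x\<in>L. w x \<le> C * sig x" "\<forall>x\<in>L. sig x \<le> w x" "\<forall>x\<in>F. sig x \<le> 2"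
     "\<forall>a\<in>L. \<forall>b\<in>L. sig (a + b) \<le> sig a * sig b" "\<forall>x\<in>L. sig x > 0"
    using sigma_exists[OF sg adm F(1,2)] by blast
  have sigpos: "0 \<le> sig x" if "x \<in> L" for x using SC(6) that by (simp add: less_imp_le)
  have sigsub: "sig (a + b) \<le> sig a * sig b" if "a \<in> L" "b \<in> L" for a b using SC(5) that by blast
  have rs: "l1 sig r" using l1_le_scale(1)[OF rw, of sig 1] sigpos SC(3) by auto
  have nrs: "nw sig r \<le> 3 / (4 * Kb)"
  proof -
    define h where "h x = norm (r x) * w x + (if x \<in> F then 2 * norm (r x) - norm (r x) * w x else 0)" for x
    have hs1: "((\<lambda>x. norm (r x) * w x) has_sum nw w r) L" using rw unfolding l1_def nw_def by simp
    have hs2: "((\<lambda>x. if x \<in> F then 2 * norm (r x) - norm (r x) * w x else 0) has_sum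
        sum (\<lambda>x. 2 * norm (r x) - norm (r x) * w x) F) L"
    proof -
      have "((\<lambda>x. 2 * norm (r x) - norm (r x) * w x) has_sum sum (\<lambda>x. 2 * norm (r x) - norm (r x) * w x) F) F"
        using F(1) by simp
      then show ?thesis
        by (subst has_sum_cong_neutral[where T=F]) (use F(2) in auto)
    qed
    have hh: "(h has_sum (nw w r + sum (\<lambda>x. 2 * norm (r x) - norm (r x) * w x) F)) L"
      unfolding h_def by (rule has_sum_add[OF hs1 hs2])
    have "nw sig r \<le> infsum h L"
      unfolding nw_def
    proof (rule infsum_mono)
      show "(\<lambda>x. norm (r x) * sig x) summable_on L" using rs by (simp add: l1_def)
      show "h summable_on L" using hh by (auto simp: summable_on_def)
      fix x assume x: "x \<in> L"
      show "norm (r x) * sig x \<le> h x"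
      proof (cases "x \<in> F")
        case True
        then show ?thesis using SC(4) mult_left_mono[of "sig x" 2 "norm (r x)"] by (auto simp: h_def mult.commute)
      next
        case False
        then show ?thesis using SC(3) x mult_left_mono[of "sig x" "w x" "norm (r x)"] by (auto simp: h_def)
      qed
    qed
    also have "\<dots> = nw w r + sum (\<lambda>x. 2 * norm (r x) - norm (r x) * w x) F" using hh by (simp add: infsumI)
    also have "\<dots> = (nw w r - sum (\<lambda>x. norm (r x) * w x) F) + 2 * sum (\<lambda>x. norm (r x) * 1) F"
      by (simp add: sum_subtractf sum_distrib_left)
    also have "\<dots> \<le> 1 / (4 * Kb) + 2 * nw (\<lambda>_. 1) r"
    proof -
      have "sum (\<lambda>x. norm (r x) * 1) F \<le> nw (\<lambda>_. 1) r"
        unfolding nw_def by (rule finite_sum_le_infsum) (use r1 F in \<open>auto simp: l1_def\<close>)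
      moreover have "nw w r - sum (\<lambda>x. norm (r x) * w x) F \<le> 1 / (4 * Kb)"
        using F(3) by (simp add: dist_real_def)
      ultimately show ?thesis by linarith
    qed
    also have "\<dots> \<le> 3 / (4 * Kb)" using nr1 by simp
    finally show ?thesis .
  qed
  define q where "q = Kb * nw sig r"
  have q0: "q \<ge> 0" unfolding q_def using Kp nw_nonneg[of sig r] sigpos by simp
  have q1: "q \<le> 3 / 4" unfolding q_def using nrs Kp by (simp add: field_simps)
  \<comment> \<open>Step 4: powers\<close>
  define rp where "rp k = ((\<lambda>f. conv r f) ^^ k) del" for k
  have rp0: "rp 0 = del" by (simp add: rp_def)
  have rpS: "rp (Suc k) = conv r (rp k)" for k by (simp add: rp_def)
  have sig0: "sig 0 \<le> 1" using SC(3) zL w0 by auto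
  have rp_props: "supp0 (rp k) \<and> l1 (\<lambda>_. 1) (rp k) \<and> l1 sig (rp k) \<and> nw sig (rp k) \<le> norm one * q ^ k" for k
  proof (induction k)
    case 0
    have "nw sig del \<le> norm one" unfolding del_def del_nw using sig0 mult_left_mono[OF sig0, of "norm one"] by simp
    then show ?case using del_supp del_l1 by (simp add: rp0 del_def)
  next
    case (Suc k)
    have a: "l1 (\<lambda>_. 1) (conv r (rp k))" by (rule CL(1)[OF r1]) (use Suc r1 in auto)
    have b: "l1 sig (conv r (rp k))" by (rule CL(1)[OF r1 _ sigpos sigsub rs]) (use Suc in auto)
    have "nw sig (conv r (rp k)) \<le> Kb * nw sig r * nw sig (rp k)"
      by (rule CL(2)[OF r1 _ sigpos sigsub rs]) (use Suc in auto)
    also have "\<dots> \<le> q * (norm one * q ^ k)"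
      unfolding q_def by (rule mult_left_mono) (use Suc q0 q_def in auto)
    finally show ?case using a b conv_supp by (simp add: rpS algebra_simps)
  qed
  have rpw: "l1 w (rp k)" "nw w (rp k) \<le> C * (norm one * q ^ k)" for k
  proof -
    show "l1 w (rp k)" using l1_le_scale(1)[of sig "rp k" w C] rp_props[of k] SC(2) wpos by auto
    have "nw w (rp k) \<le> C * nw sig (rp k)" using l1_le_scale(2)[of sig "rp k" w C] rp_props[of k] SC(2) wpos by auto
    also have "\<dots> \<le> C * (norm one * q ^ k)" using rp_props[of k] SC(1) by (intro mult_left_mono) auto
    finally show "nw w (rp k) \<le> C * (norm one * q ^ k)" .
  qed
  have rp1: "nw (\<lambda>_. 1) (rp k) \<le> C * (norm one * q ^ k)" for k
    using l1_le_scale(2)[OF rpw(1)[of k], of "\<lambda>_. 1" 1] w1 rpw(2)[of k] by auto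
  \<comment> \<open>Step 5: telescoping\<close>
  have e_cg: "conv e u = g"
    unfolding u_def using conv_assoc[OF e1 c1(1) gl1] ec conv_unit_left[OF g0] by simp
  have e_r: "conv e r = d"
  proof
    fix v
    show "conv e r v = d v"
      unfolding r_def using conv_diff_right[OF e1 del_l1 u1, of v] e_cg conv_unit_right[OF e0]
      by (simp add: d_def del_def)
  qed
  have step: "conv e (rp (Suc k)) v = conv e (rp k) v - conv g (rp k) v" for k v
  proof -
    have "conv e (rp (Suc k)) = conv (conv e r) (rp k)"
      unfolding rpS using conv_assoc[OF e1 r1, of "rp k"] rp_props[of k] by simp
    also have "\<dots> = conv d (rp k)" by (simp add: e_r)
    finally show ?thesis unfolding d_def using conv_diff_left[OF e1 gl1, of "rp k" v] rp_props[of k] by simp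
  qed
  have tele: "e v = (\<Sum>k<N. conv g (rp k) v) + conv e (rp N) v" for N v
  proof (induction N)
    case 0 then show ?case using conv_unit_right[OF e0] by (simp add: rp0 del_def)
  next
    case (Suc N) then show ?case using step[of N v] by simp
  qed
  \<comment> \<open>Step 6: bound\<close>
  define M where "M = Kb * nw w g * C * norm one * 4"
  have ngw: "nw w g \<ge> 0" by (rule nw_nonneg) (rule wpos)
  have geo: "(\<Sum>k<N. q ^ k) \<le> 4" for N
  proof -
    have "(\<Sum>k<N. q ^ k) = (1 - q ^ N) / (1 - q)" using q1 by (simp add: sum_gp_strict)
    also have "\<dots> \<le> 1 / (1 - q)" using q0 q1 by (intro divide_right_mono) auto
    also have "\<dots> \<le> 4" using q1 by (simp add: field_simps)
    finally show ?thesis .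
  qed
  have bnd: "sum (\<lambda>v. norm (e v) * w v) F' \<le> M + 1" if F': "finite F'" "F' \<subseteq> L" for F'
  proof -
    define W where "W = sum w F'"
    have W0: "W \<ge> 0" unfolding W_def using F' wpos by (auto intro: sum_nonneg)
    define B where "B = Kb * nw (\<lambda>_. 1) e * (C * norm one)"
    have B0: "B \<ge> 0" unfolding B_def using Kp ne1 SC(1) by simp
    have "(\<lambda>N. B * W * q ^ N) \<longlonglongrightarrow> B * W * 0"
      by (intro tendsto_mult tendsto_const LIMSEQ_power_zero) (use q0 q1 in auto)
    then have "eventually (\<lambda>N. B * W * q ^ N < 1) sequentially" by (rule order_tendstoD) simp
    then obtain N where N: "B * W * q ^ N < 1" by (auto simp: eventually_sequentially)
    have pt: "norm (conv e (rp N) v) \<le> B * q ^ N" if v: "v \<in> L" for v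
    proof -
      have "norm (conv e (rp N) v) \<le> nw (\<lambda>_. 1) (conv e (rp N))"
        by (rule nw_point[OF CL(1)[OF e1 _ _ _ e1] v]) (use rp_props[of N] in auto)
      also have "\<dots> \<le> Kb * nw (\<lambda>_. 1) e * nw (\<lambda>_. 1) (rp N)"
        by (rule CL(2)[OF e1]) (use rp_props[of N] e1 in auto)
      also have "\<dots> \<le> Kb * nw (\<lambda>_. 1) e * (C * (norm one * q ^ N))"
        by (rule mult_left_mono[OF rp1]) (use Kp ne1 in auto)
      finally show ?thesis by (simp add: B_def algebra_simps)
    qed
    have "sum (\<lambda>v. norm (e v) * w v) F' \<le>
        sum (\<lambda>v. (\<Sum>k<N. norm (conv g (rp k) v) * w v) + (B * q ^ N) * w v) F'"
    proof (rule sum_mono)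
      fix v assume v: "v \<in> F'"
      then have vL: "v \<in> L" using F' by auto
      have "norm (e v) \<le> norm (\<Sum>k<N. conv g (rp k) v) + norm (conv e (rp N) v)"
        using norm_triangle_ineq[of "\<Sum>k<N. conv g (rp k) v" "conv e (rp N) v"] tele[of v N] by simp
      also have "\<dots> \<le> (\<Sum>k<N. norm (conv g (rp k) v)) + B * q ^ N"
        by (rule add_mono[OF norm_sum pt[OF vL]])
      finally have "norm (e v) * w v \<le> ((\<Sum>k<N. norm (conv g (rp k) v)) + B * q ^ N) * w v"
        by (rule mult_right_mono[OF _ wpos[OF vL]])
      also have "\<dots> = (\<Sum>k<N. norm (conv g (rp k) v) * w v) + (B * q ^ N) * w v"
        by (simp add: sum_distrib_right distrib_right)
      finally show "norm (e v) * w v \<le> (\<Sum>k<N. norm (conv g (rp k) v) * w v) + (B * q ^ N) * w v" .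
    qed
    also have "\<dots> = sum (\<lambda>v. \<Sum>k<N. norm (conv g (rp k) v) * w v) F' + sum (\<lambda>v. (B * q ^ N) * w v) F'"
      by (rule sum.distrib)
    also have "\<dots> = (\<Sum>k<N. sum (\<lambda>v. norm (conv g (rp k) v) * w v) F') + (B * q ^ N) * W"
      unfolding W_def by (simp only: sum.swap[of _ F'] sum_distrib_left)
    also have "\<dots> = (\<Sum>k<N. sum (\<lambda>v. norm (conv g (rp k) v) * w v) F') + B * W * q ^ N"
      by (simp only: mult_ac)
    also have "\<dots> \<le> (\<Sum>k<N. Kb * nw w g * (C * (norm one * q ^ k))) + 1"
    proof (intro add_mono sum_mono less_imp_le[OF N])
      fix k
      have l1k: "l1 w (conv g (rp k))" by (rule CL(1)[OF gl1 _ wpos wsub gl1 rpw(1)]) (use rp_props[of k] in auto)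
      have "sum (\<lambda>v. norm (conv g (rp k) v) * w v) F' \<le> nw w (conv g (rp k))"
        unfolding nw_def by (rule finite_sum_le_infsum) (use l1k F' wpos in \<open>auto simp: l1_def\<close>)
      also have "\<dots> \<le> Kb * nw w g * nw w (rp k)"
        by (rule CL(2)[OF gl1 _ wpos wsub gl1 rpw(1)]) (use rp_props[of k] in auto)
      also have "\<dots> \<le> Kb * nw w g * (C * (norm one * q ^ k))"
        by (rule mult_left_mono[OF rpw(2)]) (use Kp ngw in auto)
      finally show "sum (\<lambda>v. norm (conv g (rp k) v) * w v) F' \<le> Kb * nw w g * (C * (norm one * q ^ k))" .
    qed
    also have "\<dots> = Kb * nw w g * C * norm one * (\<Sum>k<N. q ^ k) + 1"
      by (simp add: sum_distrib_left algebra_simps)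
    also have "\<dots> \<le> M + 1"
      unfolding M_def using geo[of N] Kp ngw SC(1)
      by (intro add_mono mult_left_mono) auto
    finally show ?thesis .
  qed
  show "l1 w e" unfolding l1_def
    by (rule nonneg_bdd_above_summable_on) (use wpos bnd in \<open>auto simp: bdd_above_def\<close>)
qed

end


section \<open>Generic matrices over an entry product\<close>

definition mm :: "('a::real_normed_vector \<Rightarrow> 'a \<Rightarrow> 'a) \<Rightarrow> 'a^'n::finite^'n \<Rightarrow> 'a^'n^'n \<Rightarrow> 'a^'n^'n" where
  "mm p A B = (\<chi> i j. \<Sum>k\<in>UNIV. p (A$i$k) (B$k$j))"

definition mv :: "('a::real_normed_vector \<Rightarrow> 'a \<Rightarrow> 'a) \<Rightarrow> 'a^'n::finite^'n \<Rightarrow> 'a^'n \<Rightarrow> 'a^'n" where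
  "mv p A x = (\<chi> i. \<Sum>j\<in>UNIV. p (A$i$j) (x$j))"

definition munit :: "'a::real_normed_vector \<Rightarrow> 'a^'n::finite^'n" where
  "munit one = (\<chi> i j. if i = j then one else 0)"

lemma vec_norm_le_sum: "norm (x::'a::real_normed_vector^'n) \<le> (\<Sum>i\<in>UNIV. norm (x$i))"
  by (simp add: norm_vec_def L2_set_le_sum)

lemma entry_le: "norm (A$i$j) \<le> norm (A::'a::real_normed_vector^'n^'m)"
  using Finite_Cartesian_Product.norm_nth_le[of "A$i" j] Finite_Cartesian_Product.norm_nth_le[of A i] by linarith

lemma mm_bb:
  assumes bp: "bounded_bilinear p"
  shows "bounded_bilinear (mm p :: 'a::real_normed_vector^'n::finite^'n \<Rightarrow> _)"
proof -
  interpret p: bounded_bilinear p by (rule bp)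
  obtain K where K: "K \<ge> 0" "\<And>a b. norm (p a b) \<le> norm a * norm b * K" using p.nonneg_bounded by blast
  have bnd: "norm (mm p A B) \<le> norm A * norm B * (real CARD('n) * real CARD('n) * real CARD('n) * K)"
    for A B :: "'a^'n^'n"
  proof -
      have "norm (mm p A B) \<le> (\<Sum>i\<in>UNIV. norm (mm p A B $ i))" by (rule vec_norm_le_sum)
      also have "\<dots> \<le> (\<Sum>i\<in>(UNIV::'n set). \<Sum>j\<in>(UNIV::'n set). \<Sum>k\<in>(UNIV::'n set). norm A * norm B * K)"
      proof (rule sum_mono)
        fix i
        have "norm (mm p A B $ i) \<le> (\<Sum>j\<in>UNIV. norm (mm p A B $ i $ j))" by (rule vec_norm_le_sum)
        also have "\<dots> \<le> (\<Sum>j\<in>(UNIV::'n set). \<Sum>k\<in>(UNIV::'n set). norm A * norm B * K)"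
        proof (rule sum_mono)
          fix j
          have "norm (mm p A B $ i $ j) \<le> (\<Sum>k\<in>UNIV. norm (p (A$i$k) (B$k$j)))"
            unfolding mm_def by (simp add: norm_sum)
          also have "\<dots> \<le> (\<Sum>k\<in>(UNIV::'n set). norm A * norm B * K)"
          proof (rule sum_mono)
            fix k
            have "norm (p (A$i$k) (B$k$j)) \<le> norm (A$i$k) * norm (B$k$j) * K" by (rule K(2))
            also have "\<dots> \<le> norm A * norm B * K"
              by (intro mult_right_mono mult_mono entry_le) (use K(1) in auto)
            finally show "norm (p (A$i$k) (B$k$j)) \<le> norm A * norm B * K" .
          qed
          finally show "norm (mm p A B $ i $ j) \<le> (\<Sum>k\<in>(UNIV::'n set). norm A * norm B * K)" .
        qed
        finally show "norm (mm p A B $ i) \<le> (\<Sum>j\<in>(UNIV::'n set). \<Sum>k\<in>(UNIV::'n set). norm A * norm B * K)" .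
      qed
      also have "\<dots> = norm A * norm B * (real CARD('n) * real CARD('n) * real CARD('n) * K)"
        by (simp add: algebra_simps)
      finally show ?thesis .
  qed
  show ?thesis
  proof (unfold_locales)
    fix A B C :: "'a^'n^'n" and r :: real
    show "mm p (A + B) C = mm p A C + mm p B C"
      by (simp add: mm_def vec_eq_iff p.add_left sum.distrib)
    show "mm p A (B + C) = mm p A B + mm p A C"
      by (simp add: mm_def vec_eq_iff p.add_right sum.distrib)
    show "mm p (r *\<^sub>R A) B = r *\<^sub>R mm p A B"
      by (simp add: mm_def vec_eq_iff p.scaleR_left scaleR_sum_right)
    show "mm p A (r *\<^sub>R B) = r *\<^sub>R mm p A B"
      by (simp add: mm_def vec_eq_iff p.scaleR_right scaleR_sum_right)
  next
    show "\<exists>K. \<forall>A B :: 'a^'n^'n. norm (mm p A B) \<le> norm A * norm B * K"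
      by (rule exI[of _ "real CARD('n) * real CARD('n) * real CARD('n) * K"], intro allI, rule bnd)
  qed
qed

lemma mm_assoc:
  assumes bp: "bounded_bilinear p" and pa: "\<And>x y z. p (p x y) z = p x (p y z)"
  shows "mm p (mm p A B) C = mm p A (mm p B (C :: 'a::real_normed_vector^'n::finite^'n))"
proof -
  interpret p: bounded_bilinear p by (rule bp)
  have e: "(\<Sum>l\<in>UNIV. p (\<Sum>k\<in>UNIV. p (A$i$k) (B$k$l)) (C$l$j)) =
      (\<Sum>k\<in>UNIV. p (A$i$k) (\<Sum>l\<in>UNIV. p (B$k$l) (C$l$j)))" for i j
  proof -
    have "(\<Sum>l\<in>UNIV. p (\<Sum>k\<in>UNIV. p (A$i$k) (B$k$l)) (C$l$j)) =
        (\<Sum>l\<in>UNIV. \<Sum>k\<in>UNIV. p (p (A$i$k) (B$k$l)) (C$l$j))" by (simp add: p.sum_left)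
    also have "\<dots> = (\<Sum>k\<in>UNIV. \<Sum>l\<in>UNIV. p (p (A$i$k) (B$k$l)) (C$l$j))" by (rule sum.swap)
    also have "\<dots> = (\<Sum>k\<in>UNIV. p (A$i$k) (\<Sum>l\<in>UNIV. p (B$k$l) (C$l$j)))" by (simp add: p.sum_right pa)
    finally show ?thesis .
  qed
  show ?thesis by (simp add: mm_def vec_eq_iff e)
qed

lemma mm_unit:
  assumes bp: "bounded_bilinear p" and u1: "\<And>x. p one x = x" and u2: "\<And>x. p x one = x"
  shows "mm p (munit one) A = A" "mm p A (munit one) = (A :: 'a::real_normed_vector^'n::finite^'n)"
proof -
  interpret p: bounded_bilinear p by (rule bp)
  have a: "(\<Sum>k\<in>UNIV. p (if i = k then one else 0) (A$k$j)) = A$i$j" for i j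
  proof -
    have "(\<Sum>k\<in>UNIV. p (if i = k then one else 0) (A$k$j)) = (\<Sum>k\<in>UNIV. if i = k then A$k$j else 0)"
      by (rule sum.cong) (auto simp: u1 p.zero_left)
    then show ?thesis by simp
  qed
  have b: "(\<Sum>k\<in>UNIV. p (A$i$k) (if k = j then one else 0)) = A$i$j" for i j
  proof -
    have "(\<Sum>k\<in>UNIV. p (A$i$k) (if k = j then one else 0)) = (\<Sum>k\<in>UNIV. if k = j then A$i$k else 0)"
      by (rule sum.cong) (auto simp: u2 p.zero_right)
    then show ?thesis by simp
  qed
  show "mm p (munit one) A = A" by (simp add: mm_def munit_def vec_eq_iff a)
  show "mm p A (munit one) = A" by (simp add: mm_def munit_def vec_eq_iff b)
qed

lemma mv_bl:
  assumes bp: "bounded_bilinear p"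
  shows "bounded_linear (mv p (A :: 'a::real_normed_vector^'n::finite^'n))"
    and "\<exists>b. \<forall>A::'a^'n^'n. onorm (mv p A) \<le> b * norm A"
proof -
  interpret p: bounded_bilinear p by (rule bp)
  obtain K where K: "K \<ge> 0" "\<And>a b. norm (p a b) \<le> norm a * norm b * K" using p.nonneg_bounded by blast
  have bnd: "norm (mv p A x) \<le> (real CARD('n) * real CARD('n) * K * norm A) * norm x" for A :: "'a^'n^'n" and x
  proof -
    have "norm (mv p A x) \<le> (\<Sum>i\<in>UNIV. norm (mv p A x $ i))" by (rule vec_norm_le_sum)
    also have "\<dots> \<le> (\<Sum>i\<in>(UNIV::'n set). \<Sum>j\<in>(UNIV::'n set). norm A * norm x * K)"
    proof (rule sum_mono)
      fix i
      have "norm (mv p A x $ i) \<le> (\<Sum>j\<in>UNIV. norm (p (A$i$j) (x$j)))"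
        unfolding mv_def by (simp add: norm_sum)
      also have "\<dots> \<le> (\<Sum>j\<in>(UNIV::'n set). norm A * norm x * K)"
      proof (rule sum_mono)
        fix j
        have "norm (p (A$i$j) (x$j)) \<le> norm (A$i$j) * norm (x$j) * K" by (rule K(2))
        also have "\<dots> \<le> norm A * norm x * K"
          by (intro mult_right_mono mult_mono entry_le Finite_Cartesian_Product.norm_nth_le) (use K(1) in auto)
        finally show "norm (p (A$i$j) (x$j)) \<le> norm A * norm x * K" .
      qed
      finally show "norm (mv p A x $ i) \<le> (\<Sum>j\<in>(UNIV::'n set). norm A * norm x * K)" .
    qed
    also have "\<dots> = (real CARD('n) * real CARD('n) * K * norm A) * norm x" by (simp add: algebra_simps)
    finally show ?thesis .
  qed
  show bl: "bounded_linear (mv p (A :: 'a^'n^'n))" for A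
  proof (rule bounded_linear_intro[where K="real CARD('n) * real CARD('n) * K * norm A"])
    show "mv p A (x + y) = mv p A x + mv p A y" for x y
      by (simp add: mv_def vec_eq_iff p.add_right sum.distrib)
    show "mv p A (r *\<^sub>R x) = r *\<^sub>R mv p A x" for r x
      by (simp add: mv_def vec_eq_iff p.scaleR_right scaleR_sum_right)
    show "norm (mv p A x) \<le> norm x * (real CARD('n) * real CARD('n) * K * norm A)" for x
      using bnd[of A x] by (simp add: mult.commute)
  qed
  show "\<exists>b. \<forall>A::'a^'n^'n. onorm (mv p A) \<le> b * norm A"
  proof (intro exI[of _ "real CARD('n) * real CARD('n) * K"] allI)
    fix A :: "'a^'n^'n"
    show "onorm (mv p A) \<le> real CARD('n) * real CARD('n) * K * norm A"
      by (rule onorm_bound) (use bnd K(1) in auto)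
  qed
qed

lemma mv_lower:
  assumes bp: "bounded_bilinear p" and u2: "\<And>x. p x one = x"
  shows "norm (A :: 'a::real_normed_vector^'n::finite^'n) \<le> (real CARD('n) * real CARD('n) * norm one) * onorm (mv p A)"
proof -
  interpret p: bounded_bilinear p by (rule bp)
  have bl: "bounded_linear (mv p A)" by (rule mv_bl(1)[OF bp])
  have ax: "mv p A (\<chi> k. if k = j then one else 0) $ i = A$i$j" for i j
  proof -
    have "(\<Sum>k\<in>UNIV. p (A$i$k) (if k = j then one else 0)) = (\<Sum>k\<in>UNIV. if k = j then A$i$k else 0)"
      by (rule sum.cong) (auto simp: u2 p.zero_right)
    then show ?thesis by (simp add: mv_def)
  qed
  have nax: "norm ((\<chi> k. if k = j then one else 0) :: 'a^'n) \<le> norm one" for j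
  proof -
    have "norm ((\<chi> k. if k = j then one else 0) :: 'a^'n) \<le> (\<Sum>k\<in>UNIV. norm ((\<chi> k. if k = j then one else 0) $ k :: 'a))"
      by (rule vec_norm_le_sum)
    also have "\<dots> = (\<Sum>k\<in>UNIV. if k = j then norm one else 0)" by (rule sum.cong) auto
    finally show ?thesis by simp
  qed
  have ent: "norm (A$i$j) \<le> norm one * onorm (mv p A)" for i j
  proof -
    have "norm (A$i$j) \<le> norm (mv p A (\<chi> k. if k = j then one else 0))"
      using Finite_Cartesian_Product.norm_nth_le[of "mv p A (\<chi> k. if k = j then one else 0)" i] ax by simp
    also have "\<dots> \<le> onorm (mv p A) * norm ((\<chi> k. if k = j then one else 0) :: 'a^'n)"
      by (rule onorm[OF bl])
    also have "\<dots> \<le> onorm (mv p A) * norm one"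
      by (rule mult_left_mono[OF nax onorm_pos_le[OF bl]])
    finally show ?thesis by (simp add: mult.commute)
  qed
  have "norm A \<le> (\<Sum>i\<in>UNIV. norm (A$i))" by (rule vec_norm_le_sum)
  also have "\<dots> \<le> (\<Sum>i\<in>(UNIV::'n set). \<Sum>j\<in>(UNIV::'n set). norm one * onorm (mv p A))"
  proof (rule sum_mono)
    fix i
    have "norm (A$i) \<le> (\<Sum>j\<in>UNIV. norm (A$i$j))" by (rule vec_norm_le_sum)
    also have "\<dots> \<le> (\<Sum>j\<in>(UNIV::'n set). norm one * onorm (mv p A))" by (rule sum_mono) (rule ent)
    finally show "norm (A$i) \<le> (\<Sum>j\<in>(UNIV::'n set). norm one * onorm (mv p A))" .
  qed
  also have "\<dots> = (real CARD('n) * real CARD('n) * norm one) * onorm (mv p A)" by (simp add: algebra_simps)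
  finally show ?thesis .
qed


section \<open>Quaternions\<close>

lemma vector_4 [simp]:
 "(vector [a,b,c,d] ::('a::zero)^4)$1 = a"
 "(vector [a,b,c,d] ::('a::zero)^4)$2 = b"
 "(vector [a,b,c,d] ::('a::zero)^4)$3 = c"
 "(vector [a,b,c,d] ::('a::zero)^4)$4 = d"
  unfolding vector_def by simp_all

lemma qmult_comp:
  "qmult p q $ 1 = p$1 * q$1 - p$2 * q$2 - p$3 * q$3 - p$4 * q$4"
  "qmult p q $ 2 = p$1 * q$2 + p$2 * q$1 + p$3 * q$4 - p$4 * q$3"
  "qmult p q $ 3 = p$1 * q$3 - p$2 * q$4 + p$3 * q$1 + p$4 * q$2"
  "qmult p q $ 4 = p$1 * q$4 + p$2 * q$3 - p$3 * q$2 + p$4 * q$1"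
  by (simp_all add: qmult_def)

lemma qone_comp: "qone $ 1 = 1" "qone $ 2 = 0" "qone $ 3 = 0" "qone $ 4 = 0"
  by (simp_all add: qone_def)

lemma qmult_assoc: "qmult (qmult x y) z = qmult x (qmult y z)"
  by (simp add: vec_eq_iff forall_4 qmult_comp algebra_simps)

lemma qmult_one: "qmult qone x = x" "qmult x qone = x"
  by (simp_all add: vec_eq_iff forall_4 qmult_comp qone_comp)

lemma qmult_bb: "bounded_bilinear qmult"
proof -
  have bnd: "norm (qmult p q) \<le> norm p * norm q * 16" for p q
  proof -
    have h: "\<bar>p$i * q$j\<bar> \<le> norm p * norm q" for i j
      unfolding abs_mult by (intro mult_mono component_le_norm_cart) auto
    have c: "\<bar>qmult p q $ i\<bar> \<le> 4 * (norm p * norm q)" for i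
    proof -
      have "i = 1 \<or> i = 2 \<or> i = 3 \<or> i = 4" by (rule exhaust_4)
      then show ?thesis
        using h[of 1 1] h[of 1 2] h[of 1 3] h[of 1 4] h[of 2 1] h[of 2 2] h[of 2 3] h[of 2 4]
          h[of 3 1] h[of 3 2] h[of 3 3] h[of 3 4] h[of 4 1] h[of 4 2] h[of 4 3] h[of 4 4]
        by (auto simp: qmult_comp abs_le_iff)
    qed
    have "norm (qmult p q) \<le> (\<Sum>i\<in>UNIV. \<bar>qmult p q $ i\<bar>)" by (rule norm_le_l1_cart)
    also have "\<dots> \<le> (\<Sum>i\<in>(UNIV::4 set). 4 * (norm p * norm q))" by (rule sum_mono) (rule c)
    also have "\<dots> = norm p * norm q * 16" by simp
    finally show ?thesis .
  qed
  show ?thesis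
  proof (unfold_locales)
    fix a a' b b' :: "real^4" and r :: real
    show "qmult (a + a') b = qmult a b + qmult a' b"
      by (simp add: vec_eq_iff forall_4 qmult_comp algebra_simps)
    show "qmult a (b + b') = qmult a b + qmult a b'"
      by (simp add: vec_eq_iff forall_4 qmult_comp algebra_simps)
    show "qmult (r *\<^sub>R a) b = r *\<^sub>R qmult a b"
      by (simp add: vec_eq_iff forall_4 qmult_comp algebra_simps)
    show "qmult a (r *\<^sub>R b) = r *\<^sub>R qmult a b"
      by (simp add: vec_eq_iff forall_4 qmult_comp algebra_simps)
  next
    show "\<exists>K. \<forall>a b :: real^4. norm (qmult a b) \<le> norm a * norm b * K"
      by (rule exI[of _ 16], intro allI, rule bnd)
  qed
qed


section \<open>Connecting to the frozen statement\<close>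

lemma inv_closed_generic:
  fixes mul :: "'a::banach \<Rightarrow> 'a \<Rightarrow> 'a" and nrm :: "'a \<Rightarrow> real"
  assumes D: "dalg L mul one" and adm: "admissible_weight L w"
    and a: "a > 0" "\<And>x. a * norm x \<le> nrm x" and b: "\<And>x. nrm x \<le> b * norm x"
  shows "inverse_closed mul one nrm L w"
proof -
  interpret D: dalg L mul one by (rule D)
  have w1: "w y \<ge> 1" if "y \<in> L" for y using adm that by (auto simp: admissible_weight_def weight_on_def)
  have wpos: "0 \<le> w x" if "x \<in> L" for x using w1[OF that] by linarith
  show ?thesis unfolding inverse_closed_def Dset_def
  proof (intro ballI impI)
    fix c e
    assume c: "c \<in> {c. (\<forall>x. x \<notin> L \<longrightarrow> c x = 0) \<and> (\<lambda>x. nrm (c x) * w x) summable_on L}"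
      and e: "e \<in> {c. (\<forall>x. x \<notin> L \<longrightarrow> c x = 0) \<and> (\<lambda>x. nrm (c x) * 1) summable_on L}"
      and inv: "dconv mul L c e = dunit one \<and> dconv mul L e c = dunit one"
    have tr: "(\<lambda>x. norm (f x) * v x) summable_on L"
      if "(\<lambda>x. nrm (f x) * v x) summable_on L" "\<And>x. x \<in> L \<Longrightarrow> 0 \<le> v x" for f :: "real \<Rightarrow> 'a" and v
    proof (rule summable_on_comparison_test[OF summable_on_cmult_right[OF that(1), of "1/a"]])
      fix x assume x: "x \<in> L"
      have "a * (norm (f x) * v x) \<le> nrm (f x) * v x"
        using mult_right_mono[OF a(2)[of "f x"] that(2)[OF x]] by (simp add: algebra_simps)
      then show "norm (f x) * v x \<le> 1 / a * (nrm (f x) * v x)" using a(1) by (simp add: field_simps)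
      show "0 \<le> norm (f x) * v x" using that(2)[OF x] by simp
    qed
    have "D.l1 w e"
    proof (rule D.inv_closed_abs[OF adm])
      show "D.supp0 c" "D.supp0 e" using c e by (auto simp: D.supp0_def)
      show "D.l1 w c" unfolding D.l1_def by (rule tr) (use c wpos in auto)
      show "D.l1 (\<lambda>_. 1) e" unfolding D.l1_def by (rule tr) (use e in auto)
      show "dconv mul L c e = dunit one" "dconv mul L e c = dunit one" using inv by auto
    qed
    then have S: "(\<lambda>x. b * (norm (e x) * w x)) summable_on L"
      unfolding D.l1_def by (rule summable_on_cmult_right)
    have "(\<lambda>x. nrm (e x) * w x) summable_on L"
    proof (rule summable_on_comparison_test[OF S])
      fix x assume x: "x \<in> L"
      show "nrm (e x) * w x \<le> b * (norm (e x) * w x)"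
        using mult_right_mono[OF b[of "e x"] wpos[OF x]] by (simp add: algebra_simps)
      have "0 \<le> nrm (e x)" using a(2)[of "e x"] a(1) by (smt (verit) mult_nonneg_nonneg norm_ge_zero)
      then show "0 \<le> nrm (e x) * w x" using wpos[OF x] by simp
    qed
    then show "e \<in> {c. (\<forall>x. x \<notin> L \<longrightarrow> c x = 0) \<and> (\<lambda>x. nrm (c x) * w x) summable_on L}"
      using e by auto
  qed
qed


section \<open>The three coefficient algebras\<close>

lemma cmat_mm: "((**) :: complex^'n::finite^'n \<Rightarrow> complex^'n^'n \<Rightarrow> complex^'n^'n) = mm (*)"
  by (intro ext) (simp add: mm_def matrix_matrix_mult_def)

lemma cmat_bb: "bounded_bilinear ((**) :: complex^'n::finite^'n \<Rightarrow> complex^'n^'n \<Rightarrow> complex^'n^'n)"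
  unfolding cmat_mm by (rule mm_bb[OF bounded_bilinear_mult])

lemma cmat_norm_mv: "cmat_norm (A :: complex^'n::finite^'n) = onorm (mv (*) A)"
proof -
  have "(\<lambda>x. A *v x) = mv (*) A" by (intro ext) (simp add: mv_def matrix_vector_mult_def)
  then show ?thesis by (simp add: cmat_norm_def)
qed

lemma cmat_equiv:
  "\<exists>a>0. \<exists>b. \<forall>A :: complex^'n::finite^'n. a * norm A \<le> cmat_norm A \<and> cmat_norm A \<le> b * norm A"
proof -
  obtain b where b: "\<And>A :: complex^'n^'n. onorm (mv (*) A) \<le> b * norm A"
    using mv_bl(2)[OF bounded_bilinear_mult] by blast
  define c where "c = real CARD('n) * real CARD('n)"
  have c0: "c > 0" unfolding c_def by simp
  have "norm A \<le> c * cmat_norm A" for A :: "complex^'n^'n"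
    using mv_lower[OF bounded_bilinear_mult, of 1 A] by (simp add: c_def cmat_norm_mv)
  then have "(1 / c) * norm A \<le> cmat_norm A" for A :: "complex^'n^'n"
    using c0 by (simp add: field_simps mult.commute)
  moreover have "1 / c > 0" using c0 by simp
  moreover have "cmat_norm A \<le> b * norm A" for A :: "complex^'n^'n" using b[of A] by (simp add: cmat_norm_mv)
  ultimately show ?thesis by blast
qed

lemma cmat_dalg: "exp_semigroup L \<Longrightarrow> dalg L ((**) :: complex^'n::finite^'n \<Rightarrow> complex^'n^'n \<Rightarrow> complex^'n^'n) (mat 1)"
  by (rule dalg.intro) (auto simp: cmat_bb matrix_mul_assoc)

lemma nfst: "norm (fst A) \<le> norm A" using norm_fst_le[of "fst A" "snd A"] by simp
lemma nsnd: "norm (snd A) \<le> norm A" using norm_snd_le[of "snd A" "fst A"] by simp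

lemma bcmat_dalg: "exp_semigroup L \<Longrightarrow> dalg L (bcmat_mult :: (complex^'n::finite^'n) \<times> (complex^'n^'n) \<Rightarrow> _ \<Rightarrow> _) bcmat_one"
proof (rule dalg.intro)
  interpret M: bounded_bilinear "(**) :: complex^'n^'n \<Rightarrow> complex^'n^'n \<Rightarrow> complex^'n^'n" by (rule cmat_bb)
  from M.nonneg_bounded obtain K where K0: "K \<ge> 0"
    and K1: "\<forall>(a::complex^'n^'n) (b::complex^'n^'n). norm (a ** b) \<le> norm a * norm b * K" by blast
  have K: "K \<ge> 0" "norm (a ** b) \<le> norm a * norm b * K" for a b :: "complex^'n^'n"
    using K0 K1 by auto
  have bnd: "norm (bcmat_mult A B) \<le> norm A * norm B * (2 * K)" for A B :: "(complex^'n^'n) \<times> (complex^'n^'n)"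
  proof -
    have "norm (bcmat_mult A B) \<le> norm (fst A ** fst B) + norm (snd A ** snd B)"
      unfolding bcmat_mult_def by (rule norm_Pair_le)
    also have "\<dots> \<le> norm (fst A) * norm (fst B) * K + norm (snd A) * norm (snd B) * K"
      by (intro add_mono K(2))
    also have "\<dots> \<le> norm A * norm B * K + norm A * norm B * K"
      by (intro add_mono mult_right_mono mult_mono nfst nsnd) (use K in auto)
    finally show ?thesis by (simp add: algebra_simps)
  qed
  show "bounded_bilinear (bcmat_mult :: (complex^'n::finite^'n) \<times> (complex^'n^'n) \<Rightarrow> _ \<Rightarrow> _)"
  proof (unfold_locales)
    fix a a' b b' :: "(complex^'n^'n) \<times> (complex^'n^'n)" and r :: real
    show "bcmat_mult (a + a') b = bcmat_mult a b + bcmat_mult a' b"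
      by (simp add: bcmat_mult_def M.add_left)
    show "bcmat_mult a (b + b') = bcmat_mult a b + bcmat_mult a b'"
      by (simp add: bcmat_mult_def M.add_right)
    show "bcmat_mult (r *\<^sub>R a) b = r *\<^sub>R bcmat_mult a b"
      by (simp add: bcmat_mult_def M.scaleR_left)
    show "bcmat_mult a (r *\<^sub>R b) = r *\<^sub>R bcmat_mult a b"
      by (simp add: bcmat_mult_def M.scaleR_right)
  next
    show "\<exists>K. \<forall>a b :: (complex^'n^'n) \<times> (complex^'n^'n). norm (bcmat_mult a b) \<le> norm a * norm b * K"
      by (rule exI[of _ "2 * K"], intro allI, rule bnd)
  qed
qed (auto simp: bcmat_mult_def bcmat_one_def matrix_mul_assoc)

lemma bcmat_equiv:
  "\<exists>a>0. \<exists>b. \<forall>A :: (complex^'n::finite^'n) \<times> (complex^'n^'n). a * norm A \<le> bcmat_norm A \<and> bcmat_norm A \<le> b * norm A"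
proof -
  obtain a b where ab: "a > 0" "\<And>A :: complex^'n^'n. a * norm A \<le> cmat_norm A \<and> cmat_norm A \<le> b * norm A"
    using cmat_equiv by blast
  have b0: "b \<ge> 0"
  proof -
    have "a * norm (mat 1 :: complex^'n^'n) \<le> b * norm (mat 1 :: complex^'n^'n)" using ab(2)[of "mat 1"] by linarith
    moreover have "norm (mat 1 :: complex^'n^'n) > 0"
    proof -
      have "(mat 1 :: complex^'n^'n) \<noteq> 0" by (metis matrix_mul_lid times0_right zero_neq_one mat_0 matrix_mul_rid)
      then show ?thesis by simp
    qed
    ultimately show ?thesis using ab(1) by (smt (verit) mult_le_cancel_right mult_pos_pos)
  qed
  have "a * norm A \<le> bcmat_norm A \<and> bcmat_norm A \<le> (2 * b) * norm A" for A :: "(complex^'n^'n) \<times> (complex^'n^'n)"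
  proof
    have "a * norm A \<le> a * (norm (fst A) + norm (snd A))"
      using norm_Pair_le[of "fst A" "snd A"] ab(1) by simp
    also have "\<dots> \<le> bcmat_norm A" using ab(2)[of "fst A"] ab(2)[of "snd A"] by (simp add: bcmat_norm_def algebra_simps)
    finally show "a * norm A \<le> bcmat_norm A" .
    have "bcmat_norm A \<le> b * norm (fst A) + b * norm (snd A)"
      using ab(2)[of "fst A"] ab(2)[of "snd A"] by (simp add: bcmat_norm_def)
    also have "\<dots> \<le> b * norm A + b * norm A"
      by (intro add_mono mult_left_mono nfst nsnd b0)
    finally show "bcmat_norm A \<le> (2 * b) * norm A" by simp
  qed
  then show ?thesis using ab(1) by blast
qed

lemma hmat_mm: "(hmat_mult :: (real^4)^'n::finite^'n \<Rightarrow> _ \<Rightarrow> _) = mm qmult"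
  by (intro ext) (simp add: mm_def hmat_mult_def)

lemma hmat_one_munit: "(hmat_one :: (real^4)^'n::finite^'n) = munit qone"
  by (simp add: munit_def hmat_one_def)

lemma hmat_dalg: "exp_semigroup L \<Longrightarrow> dalg L (hmat_mult :: (real^4)^'n::finite^'n \<Rightarrow> _ \<Rightarrow> _) hmat_one"
  unfolding hmat_mm hmat_one_munit
  by (rule dalg.intro)
     (auto simp: mm_bb[OF qmult_bb] mm_assoc[OF qmult_bb qmult_assoc] mm_unit[OF qmult_bb qmult_one])

lemma hmat_equiv:
  "\<exists>a>0. \<exists>b. \<forall>A :: (real^4)^'n::finite^'n. a * norm A \<le> hmat_norm A \<and> hmat_norm A \<le> b * norm A"
proof -
  have hn: "hmat_norm A = onorm (mv qmult A)" for A :: "(real^4)^'n^'n"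
  proof -
    have "hmat_vec A = mv qmult A" by (intro ext) (simp add: mv_def hmat_vec_def)
    then show ?thesis by (simp add: hmat_norm_def)
  qed
  obtain b where b: "\<And>A :: (real^4)^'n^'n. onorm (mv qmult A) \<le> b * norm A"
    using mv_bl(2)[OF qmult_bb] by blast
  define c where "c = real CARD('n) * real CARD('n) * norm qone"
  have "qone \<noteq> 0" using qone_comp(1) by auto
  then have c0: "c > 0" unfolding c_def by simp
  have "norm A \<le> c * hmat_norm A" for A :: "(real^4)^'n^'n"
    using mv_lower[OF qmult_bb qmult_one(2), of A] by (simp add: c_def hn)
  then have "(1 / c) * norm A \<le> hmat_norm A" for A :: "(real^4)^'n^'n"
    using c0 by (simp add: field_simps mult.commute)
  moreover have "1 / c > 0" using c0 by simp
  moreover have "hmat_norm A \<le> b * norm A" for A :: "(real^4)^'n^'n" using b[of A] by (simp add: hn)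
  ultimately show ?thesis by blast
qed

theorem mainTheorem10:
  fixes \<Lambda> :: "real set" and \<omega> :: "real \<Rightarrow> real"
  assumes "exp_semigroup \<Lambda>"
    and "admissible_weight \<Lambda> \<omega>"
  shows "inverse_closed (**) (mat 1 :: complex^'n::finite^'n) cmat_norm \<Lambda> \<omega>
       \<and> inverse_closed bcmat_mult (bcmat_one :: (complex^'n^'n) \<times> (complex^'n^'n)) bcmat_norm \<Lambda> \<omega>
       \<and> inverse_closed hmat_mult (hmat_one :: (real^4)^'n^'n) hmat_norm \<Lambda> \<omega>"
proof (intro conjI)
  obtain a b where ab: "a > 0" "\<And>A :: complex^'n^'n. a * norm A \<le> cmat_norm A \<and> cmat_norm A \<le> b * norm A"
    using cmat_equiv by blast
  show "inverse_closed (**) (mat 1 :: complex^'n::finite^'n) cmat_norm \<Lambda> \<omega>"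
    by (rule inv_closed_generic[OF cmat_dalg[OF assms(1)] assms(2) ab(1)]) (use ab(2) in auto)
next
  obtain a b where ab: "a > 0" "\<And>A :: (complex^'n^'n) \<times> (complex^'n^'n). a * norm A \<le> bcmat_norm A \<and> bcmat_norm A \<le> b * norm A"
    using bcmat_equiv by blast
  show "inverse_closed bcmat_mult (bcmat_one :: (complex^'n^'n) \<times> (complex^'n^'n)) bcmat_norm \<Lambda> \<omega>"
    by (rule inv_closed_generic[OF bcmat_dalg[OF assms(1)] assms(2) ab(1)]) (use ab(2) in auto)
next
  obtain a b where ab: "a > 0" "\<And>A :: (real^4)^'n^'n. a * norm A \<le> hmat_norm A \<and> hmat_norm A \<le> b * norm A"
    using hmat_equiv by blast
  show "inverse_closed hmat_mult (hmat_one :: (real^4)^'n^'n) hmat_norm \<Lambda> \<omega>"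
    by (rule inv_closed_generic[OF hmat_dalg[OF assms(1)] assms(2) ab(1)]) (use ab(2) in auto)
qed

end
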